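(* Let $A$ be a metabelian Lie $U$-algebra over a field $k$ and let $A_\Delta$ be its $\Delta$-localisation. Then $A$ and $A_\Delta$ are universally equivalent, i.e. $\mathrm{ucl}(A)=\mathrm{ucl}(A_\Delta)$: they satisfy exactly the same universal sentences of the first-order language of Lie $k$-algebras.
   Context: All algebras are over a fixed field $k$. A Lie algebra is metabelian if $(a\circ b)\circ(c\circ d)=0$ identically; $A^2$ is the ideal spanned by all products; $\mathrm{Fit}(A)$ (Fitting radical) is the ideal generated by all elements lying in nilpotent ideals of $A$. A metabelian Lie algebra $A$ is a $U$-algebra if $\mathrm{Fit}(A)$ is abelian and torsion-free as a module over $R=k[x_\alpha:\alpha\in\Lambda]$, where $\{z_\alpha:\alpha\in\Lambda\}\subseteq A$ is a family whose images form a basis of $A/\mathrm{Fit}(A)$ and the module structure is $b\cdot x_\alpha=b\circ z_\alpha$ for $b\in\mathrm{Fit}(A)$, extended multiplicatively and linearly. $\Delta$-localisation: let $V$ be the $k$-span of $\{z_\alpha\}$, $\Delta$ the ideal of $R$ generated by all $x_\alpha$, $R_\Delta$ the localisation of $R$ at $\Delta$, and $\mathrm{Fit}_\Delta(A)=R_\Delta\otimes_R\mathrm{Fit}(A)$ (containing $\mathrm{Fit}(A)$). $A_\Delta$ is the $k$-space $V\oplus\mathrm{Fit}_\Delta(A)$ with bracket: for $v,w\in V$, $v\circ w$ is the product in $A$ (an element of $\mathrm{Fit}(A)$); products of two elements of $\mathrm{Fit}_\Delta(A)$ are $0$; $u\circ z_\alpha=u\cdot x_\alpha=-z_\alpha\circ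 u$ for $u\in\mathrm{Fit}_\Delta(A)$, extended bilinearly. It is a metabelian Lie algebra containing $A=V\oplus\mathrm{Fit}(A)$ as a subalgebra. The first-order language of Lie $k$-algebras has symbols $\circ,+,-,0$ and a unary function symbol for multiplication by each scalar of $k$; $\mathrm{ucl}(B)$ is the class of Lie $k$-algebras satisfying all universal sentences of this language true in $B$. *)

theory Defs
  imports Main "HOL-Library.Poly_Mapping"
begin

record ('k, 'a) lie_alg =
  la_carrier :: "'a set"
  la_zero :: 'a
  la_add :: "'a \<Rightarrow> 'a \<Rightarrow> 'a"
  la_neg :: "'a \<Rightarrow> 'a"
  la_smul :: "'k \<Rightarrow> 'a \<Rightarrow> 'a"
  la_br :: "'a \<Rightarrow> 'a \<Rightarrow> 'a"

definition lie_alg :: "('k::field, 'a) lie_alg \<Rightarrow> bool" where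
  "lie_alg A \<longleftrightarrow>
    (let C = la_carrier A; z = la_zero A; ad = la_add A; ng = la_neg A;
         sm = la_smul A; br = la_br A in
     z \<in> C \<and>
     (\<forall>x\<in>C. \<forall>y\<in>C. ad x y \<in> C) \<and>
     (\<forall>x\<in>C. ng x \<in> C) \<and>
     (\<forall>c. \<forall>x\<in>C. sm c x \<in> C) \<and>
     (\<forall>x\<in>C. \<forall>y\<in>C. br x y \<in> C) \<and>
     (\<forall>x\<in>C. \<forall>y\<in>C. \<forall>w\<in>C. ad (ad x y) w = ad x (ad y w)) \<and>
     (\<forall>x\<in>C. \<forall>y\<in>C. ad x y = ad y x) \<and>
     (\<forall>x\<in>C. ad z x = x) \<and>
     (\<forall>x\<in>C. ad x (ng x) = z) \<and>
     (\<forall>c. \<forall>x\<in>C. \<forall>y\<in>C. sm c (ad x y) = ad (sm c x) (sm c y)) \<and>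
     (\<forall>c d. \<forall>x\<in>C. sm (c + d) x = ad (sm c x) (sm d x)) \<and>
     (\<forall>c d. \<forall>x\<in>C. sm (c * d) x = sm c (sm d x)) \<and>
     (\<forall>x\<in>C. sm 1 x = x) \<and>
     (\<forall>x\<in>C. \<forall>y\<in>C. \<forall>w\<in>C. br (ad x y) w = ad (br x w) (br y w)) \<and>
     (\<forall>x\<in>C. \<forall>y\<in>C. \<forall>w\<in>C. br x (ad y w) = ad (br x y) (br x w)) \<and>
     (\<forall>c. \<forall>x\<in>C. \<forall>y\<in>C. br (sm c x) y = sm c (br x y)) \<and>
     (\<forall>c. \<forall>x\<in>C. \<forall>y\<in>C. br x (sm c y) = sm c (br x y)) \<and>
     (\<forall>x\<in>C. br x x = z) \<and>
     (\<forall>x\<in>C. \<forall>y\<in>C. \<forall>w\<in>C.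
        ad (ad (br x (br y w)) (br y (br w x))) (br w (br x y)) = z))"

definition metabelian :: "('k, 'a) lie_alg \<Rightarrow> bool" where
  "metabelian A \<longleftrightarrow> (\<forall>a\<in>la_carrier A. \<forall>b\<in>la_carrier A. \<forall>c\<in>la_carrier A. \<forall>d\<in>la_carrier A.
      la_br A (la_br A a b) (la_br A c d) = la_zero A)"

primrec lsum :: "('k, 'a) lie_alg \<Rightarrow> 'a list \<Rightarrow> 'a" where
  "lsum A [] = la_zero A"
| "lsum A (x # xs) = la_add A x (lsum A xs)"

inductive_set lspan :: "('k, 'a) lie_alg \<Rightarrow> 'a set \<Rightarrow> 'a set" for A X where
  lspan_zero: "la_zero A \<in> lspan A X"
| lspan_gen: "x \<in> X \<Longrightarrow> x \<in> lspan A X"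
| lspan_add: "x \<in> lspan A X \<Longrightarrow> y \<in> lspan A X \<Longrightarrow> la_add A x y \<in> lspan A X"
| lspan_smul: "x \<in> lspan A X \<Longrightarrow> la_smul A c x \<in> lspan A X"

definition is_ideal :: "('k, 'a) lie_alg \<Rightarrow> 'a set \<Rightarrow> bool" where
  "is_ideal A I \<longleftrightarrow> I \<subseteq> la_carrier A \<and> la_zero A \<in> I \<and>
     (\<forall>x\<in>I. \<forall>y\<in>I. la_add A x y \<in> I) \<and> (\<forall>c. \<forall>x\<in>I. la_smul A c x \<in> I) \<and>
     (\<forall>x\<in>I. \<forall>a\<in>la_carrier A. la_br A x a \<in> I \<and> la_br A a x \<in> I)"

primrec lcs :: "('k, 'a) lie_alg \<Rightarrow> 'a set \<Rightarrow> nat \<Rightarrow> 'a set" where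
  "lcs A I 0 = I"
| "lcs A I (Suc n) = lspan A {la_br A x y | x y. x \<in> lcs A I n \<and> y \<in> I}"

definition nilpotent_ideal :: "('k, 'a) lie_alg \<Rightarrow> 'a set \<Rightarrow> bool" where
  "nilpotent_ideal A I \<longleftrightarrow> is_ideal A I \<and> (\<exists>n. lcs A I n = {la_zero A})"

definition ideal_gen :: "('k, 'a) lie_alg \<Rightarrow> 'a set \<Rightarrow> 'a set" where
  "ideal_gen A X = \<Inter>{J. is_ideal A J \<and> X \<subseteq> J}"

definition Fit :: "('k, 'a) lie_alg \<Rightarrow> 'a set" where
  "Fit A = ideal_gen A (\<Union>{I. nilpotent_ideal A I})"

type_synonym ('i, 'k) mpoly = "('i \<Rightarrow>\<^sub>0 nat) \<Rightarrow>\<^sub>0 'k"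

definition Xvar :: "'i \<Rightarrow> ('i, 'k::field) mpoly" where
  "Xvar \<alpha> = Poly_Mapping.single (Poly_Mapping.single \<alpha> 1) 1"

inductive_set Delta :: "('i, 'k::field) mpoly set" where
  Delta_zero: "0 \<in> Delta"
| Delta_gen: "q * Xvar \<alpha> \<in> Delta"
| Delta_add: "p \<in> Delta \<Longrightarrow> q \<in> Delta \<Longrightarrow> p + q \<in> Delta"

definition word_act :: "('k, 'a) lie_alg \<Rightarrow> ('i \<Rightarrow> 'a) \<Rightarrow> 'i list \<Rightarrow> 'a \<Rightarrow> 'a" where
  "word_act A z xs b = fold (\<lambda>\<alpha> c. la_br A c (z \<alpha>)) xs b"

definition mono_act :: "('k, 'a) lie_alg \<Rightarrow> ('i \<Rightarrow> 'a) \<Rightarrow> ('i \<Rightarrow>\<^sub>0 nat) \<Rightarrow> 'a \<Rightarrow> 'a" where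
  "mono_act A z m b = word_act A z (SOME xs. \<forall>\<alpha>. count_list xs \<alpha> = Poly_Mapping.lookup m \<alpha>) b"

definition poly_act :: "('k::field, 'a) lie_alg \<Rightarrow> ('i \<Rightarrow> 'a) \<Rightarrow> ('i, 'k) mpoly \<Rightarrow> 'a \<Rightarrow> 'a" where
  "poly_act A z p b = lsum A (map (\<lambda>m. la_smul A (Poly_Mapping.lookup p m) (mono_act A z m b))
                                  (SOME xs. distinct xs \<and> set xs = Poly_Mapping.keys p))"

definition basis_mod_Fit :: "('k::field, 'a) lie_alg \<Rightarrow> ('i \<Rightarrow> 'a) \<Rightarrow> bool" where
  "basis_mod_Fit A z \<longleftrightarrow>
     (\<forall>\<alpha>. z \<alpha> \<in> la_carrier A) \<and>
     (\<forall>a\<in>la_carrier A. \<exists>v\<in>lspan A (range z). \<exists>f\<in>Fit A. a = la_add A v f) \<and>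
     (\<forall>xs c. distinct xs \<longrightarrow> lsum A (map (\<lambda>\<alpha>. la_smul A (c \<alpha>) (z \<alpha>)) xs) \<in> Fit A
              \<longrightarrow> (\<forall>\<alpha>\<in>set xs. c \<alpha> = 0))"

definition U_algebra :: "('k::field, 'a) lie_alg \<Rightarrow> ('i \<Rightarrow> 'a) \<Rightarrow> bool" where
  "U_algebra A z \<longleftrightarrow> lie_alg A \<and> metabelian A \<and> basis_mod_Fit A z \<and>
     (\<forall>x\<in>Fit A. \<forall>y\<in>Fit A. la_br A x y = la_zero A) \<and>
     (\<forall>p b. p \<noteq> 0 \<longrightarrow> b \<in> Fit A \<longrightarrow> poly_act A z p b = la_zero A \<longrightarrow> b = la_zero A)"

text \<open>Elements of A_Delta = V + Fit_Delta(A) are classes of triples (v, m, s) standing for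
  v + m/s with v in V, m in Fit(A), s in R - Delta.\<close>

type_synonym ('i, 'k, 'a) ltriple = "'a \<times> 'a \<times> ('i, 'k) mpoly"

definition loc_triples :: "('k::field, 'a) lie_alg \<Rightarrow> ('i \<Rightarrow> 'a) \<Rightarrow> ('i, 'k, 'a) ltriple set" where
  "loc_triples A z = {(v, m, s). v \<in> lspan A (range z) \<and> m \<in> Fit A \<and> s \<notin> Delta}"

definition loc_rel :: "('k::field, 'a) lie_alg \<Rightarrow> ('i \<Rightarrow> 'a) \<Rightarrow>
    ('i, 'k, 'a) ltriple \<Rightarrow> ('i, 'k, 'a) ltriple \<Rightarrow> bool" where
  "loc_rel A z t t' \<longleftrightarrow> (case t of (v, m, s) \<Rightarrow> case t' of (v', m', s') \<Rightarrow>
     v = v' \<and> (\<exists>u. u \<notin> Delta \<and>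
       poly_act A z u (la_add A (poly_act A z s' m) (la_neg A (poly_act A z s m'))) = la_zero A))"

definition loc_cls :: "('k::field, 'a) lie_alg \<Rightarrow> ('i \<Rightarrow> 'a) \<Rightarrow>
    ('i, 'k, 'a) ltriple \<Rightarrow> ('i, 'k, 'a) ltriple set" where
  "loc_cls A z t = {t' \<in> loc_triples A z. loc_rel A z t t'}"

definition loc_rep :: "('i, 'k, 'a) ltriple set \<Rightarrow> ('i, 'k, 'a) ltriple" where
  "loc_rep Q = (SOME t. t \<in> Q)"

definition loc_Delta :: "('k::field, 'a) lie_alg \<Rightarrow> ('i \<Rightarrow> 'a) \<Rightarrow> ('k, ('i, 'k, 'a) ltriple set) lie_alg" where
  "loc_Delta A z =
    (let act = poly_act A z; ad = la_add A; ng = la_neg A; br = la_br A; cl = loc_cls A z in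
    \<lparr> la_carrier = loc_cls A z ` loc_triples A z,
      la_zero = cl (la_zero A, la_zero A, 1),
      la_add = (\<lambda>Q Q'. case loc_rep Q of (v, m, s) \<Rightarrow> case loc_rep Q' of (v', m', s') \<Rightarrow>
                  cl (ad v v', ad (act s' m) (act s m'), s * s')),
      la_neg = (\<lambda>Q. case loc_rep Q of (v, m, s) \<Rightarrow> cl (ng v, ng m, s)),
      la_smul = (\<lambda>c Q. case loc_rep Q of (v, m, s) \<Rightarrow> cl (la_smul A c v, la_smul A c m, s)),
      la_br = (\<lambda>Q Q'. case loc_rep Q of (v, m, s) \<Rightarrow> case loc_rep Q' of (v', m', s') \<Rightarrow>
                  cl (la_zero A,
                      ad (ad (act (s * s') (br v v')) (act s' (br m v'))) (ng (act s (br m' v))),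
                      s * s')) \<rparr>)"

datatype 'k ltm = TVar nat | TZero | TAdd "'k ltm" "'k ltm" | TNeg "'k ltm"
  | TSmul 'k "'k ltm" | TBr "'k ltm" "'k ltm"

datatype 'k lfm = FEq "'k ltm" "'k ltm" | FFalse | FNot "'k lfm" | FAnd "'k lfm" "'k lfm"
  | FOr "'k lfm" "'k lfm" | FImp "'k lfm" "'k lfm" | FAll nat "'k lfm" | FEx nat "'k lfm"

primrec tm_vars :: "'k ltm \<Rightarrow> nat set" where
  "tm_vars (TVar n) = {n}"
| "tm_vars TZero = {}"
| "tm_vars (TAdd s t) = tm_vars s \<union> tm_vars t"
| "tm_vars (TNeg t) = tm_vars t"
| "tm_vars (TSmul c t) = tm_vars t"
| "tm_vars (TBr s t) = tm_vars s \<union> tm_vars t"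

primrec fm_free :: "'k lfm \<Rightarrow> nat set" where
  "fm_free (FEq s t) = tm_vars s \<union> tm_vars t"
| "fm_free FFalse = {}"
| "fm_free (FNot p) = fm_free p"
| "fm_free (FAnd p q) = fm_free p \<union> fm_free q"
| "fm_free (FOr p q) = fm_free p \<union> fm_free q"
| "fm_free (FImp p q) = fm_free p \<union> fm_free q"
| "fm_free (FAll x p) = fm_free p - {x}"
| "fm_free (FEx x p) = fm_free p - {x}"

primrec qfree :: "'k lfm \<Rightarrow> bool" where
  "qfree (FEq s t) = True"
| "qfree FFalse = True"
| "qfree (FNot p) = qfree p"
| "qfree (FAnd p q) = (qfree p \<and> qfree q)"
| "qfree (FOr p q) = (qfree p \<and> qfree q)"
| "qfree (FImp p q) = (qfree p \<and> qfree q)"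
| "qfree (FAll x p) = False"
| "qfree (FEx x p) = False"

fun universal :: "'k lfm \<Rightarrow> bool" where
  "universal (FAll x p) = universal p"
| "universal p = qfree p"

definition universal_sentence :: "'k lfm \<Rightarrow> bool" where
  "universal_sentence p \<longleftrightarrow> universal p \<and> fm_free p = {}"

primrec tm_eval :: "('k, 'a) lie_alg \<Rightarrow> (nat \<Rightarrow> 'a) \<Rightarrow> 'k ltm \<Rightarrow> 'a" where
  "tm_eval A e (TVar n) = e n"
| "tm_eval A e TZero = la_zero A"
| "tm_eval A e (TAdd s t) = la_add A (tm_eval A e s) (tm_eval A e t)"
| "tm_eval A e (TNeg t) = la_neg A (tm_eval A e t)"
| "tm_eval A e (TSmul c t) = la_smul A c (tm_eval A e t)"
| "tm_eval A e (TBr s t) = la_br A (tm_eval A e s) (tm_eval A e t)"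

primrec holds :: "('k, 'a) lie_alg \<Rightarrow> (nat \<Rightarrow> 'a) \<Rightarrow> 'k lfm \<Rightarrow> bool" where
  "holds A e (FEq s t) = (tm_eval A e s = tm_eval A e t)"
| "holds A e FFalse = False"
| "holds A e (FNot p) = (\<not> holds A e p)"
| "holds A e (FAnd p q) = (holds A e p \<and> holds A e q)"
| "holds A e (FOr p q) = (holds A e p \<or> holds A e q)"
| "holds A e (FImp p q) = (holds A e p \<longrightarrow> holds A e q)"
| "holds A e (FAll x p) = (\<forall>a\<in>la_carrier A. holds A (e(x := a)) p)"
| "holds A e (FEx x p) = (\<exists>a\<in>la_carrier A. holds A (e(x := a)) p)"

definition satisfies :: "('k, 'a) lie_alg \<Rightarrow> 'k lfm \<Rightarrow> bool" where
  "satisfies A p \<longleftrightarrow> (\<forall>e. (\<forall>n. e n \<in> la_carrier A) \<longrightarrow> holds A e p)"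

definition universally_equivalent :: "('k, 'a) lie_alg \<Rightarrow> ('k, 'b) lie_alg \<Rightarrow> bool" where
  "universally_equivalent A B \<longleftrightarrow>
     (\<forall>p. universal_sentence p \<longrightarrow> (satisfies A p \<longleftrightarrow> satisfies B p))"

end

theory Submission
  imports Defs
begin


locale UA =
  fixes A :: "('k::field, 'a) lie_alg" and z :: "'i \<Rightarrow> 'a"
  assumes UA: "U_algebra A z"
begin

abbreviation "C \<equiv> la_carrier A"
abbreviation "ze \<equiv> la_zero A"
abbreviation "pl \<equiv> la_add A"
abbreviation "ng \<equiv> la_neg A"
abbreviation "sm \<equiv> la_smul A"
abbreviation "br \<equiv> la_br A"
abbreviation "F \<equiv> Fit A"
abbreviation "V \<equiv> lspan A (range z)"
abbreviation "P \<equiv> poly_act A z"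

lemma lie: "lie_alg A" using UA by (simp add: U_algebra_def)
lemma met: "metabelian A" using UA by (simp add: U_algebra_def)

lemma zero_C[simp]: "ze \<in> C" using lie unfolding lie_alg_def Let_def by (elim conjE) (blast | simp)
lemma add_C[simp]: "x \<in> C \<Longrightarrow> y \<in> C \<Longrightarrow> pl x y \<in> C" using lie unfolding lie_alg_def Let_def by (elim conjE) (blast | simp)
lemma neg_C[simp]: "x \<in> C \<Longrightarrow> ng x \<in> C" using lie unfolding lie_alg_def Let_def by (elim conjE) (blast | simp)
lemma sm_C[simp]: "x \<in> C \<Longrightarrow> sm c x \<in> C" using lie unfolding lie_alg_def Let_def by (elim conjE) (blast | simp)
lemma br_C[simp]: "x \<in> C \<Longrightarrow> y \<in> C \<Longrightarrow> br x y \<in> C" using lie unfolding lie_alg_def Let_def by (elim conjE) (blast | simp)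
lemma add_assoc: "x \<in> C \<Longrightarrow> y \<in> C \<Longrightarrow> w \<in> C \<Longrightarrow> pl (pl x y) w = pl x (pl y w)"
  using lie unfolding lie_alg_def Let_def by (elim conjE) (blast | simp)
lemma add_comm: "x \<in> C \<Longrightarrow> y \<in> C \<Longrightarrow> pl x y = pl y x"
  using lie unfolding lie_alg_def Let_def by (elim conjE) (blast | simp)
lemma zero_l[simp]: "x \<in> C \<Longrightarrow> pl ze x = x" using lie unfolding lie_alg_def Let_def by (elim conjE) (blast | simp)
lemma neg_r[simp]: "x \<in> C \<Longrightarrow> pl x (ng x) = ze" using lie unfolding lie_alg_def Let_def by (elim conjE) (blast | simp)
lemma sm_add: "x \<in> C \<Longrightarrow> y \<in> C \<Longrightarrow> sm c (pl x y) = pl (sm c x) (sm c y)"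
  using lie unfolding lie_alg_def Let_def by (elim conjE) (blast | simp)
lemma add_sm: "x \<in> C \<Longrightarrow> sm (c + d) x = pl (sm c x) (sm d x)"
  using lie unfolding lie_alg_def Let_def by (elim conjE) (blast | simp)
lemma mul_sm: "x \<in> C \<Longrightarrow> sm (c * d) x = sm c (sm d x)"
  using lie unfolding lie_alg_def Let_def by (elim conjE) (blast | simp)
lemma one_sm[simp]: "x \<in> C \<Longrightarrow> sm 1 x = x"
  using lie unfolding lie_alg_def Let_def by (elim conjE) (blast | simp)
lemma br_add_l: "x \<in> C \<Longrightarrow> y \<in> C \<Longrightarrow> w \<in> C \<Longrightarrow> br (pl x y) w = pl (br x w) (br y w)"
  using lie unfolding lie_alg_def Let_def by (elim conjE) (blast | simp)
lemma br_add_r: "x \<in> C \<Longrightarrow> y \<in> C \<Longrightarrow> w \<in> C \<Longrightarrow> br x (pl y w) = pl (br x y) (br x w)"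
  using lie unfolding lie_alg_def Let_def by (elim conjE) (blast | simp)
lemma br_sm_l: "x \<in> C \<Longrightarrow> y \<in> C \<Longrightarrow> br (sm c x) y = sm c (br x y)"
  using lie unfolding lie_alg_def Let_def by (elim conjE) (blast | simp)
lemma br_sm_r: "x \<in> C \<Longrightarrow> y \<in> C \<Longrightarrow> br x (sm c y) = sm c (br x y)"
  using lie unfolding lie_alg_def Let_def by (elim conjE) (blast | simp)
lemma br_self[simp]: "x \<in> C \<Longrightarrow> br x x = ze"
  using lie unfolding lie_alg_def Let_def by (elim conjE) (blast | simp)
lemma jacobi: "x \<in> C \<Longrightarrow> y \<in> C \<Longrightarrow> w \<in> C \<Longrightarrow>
   pl (pl (br x (br y w)) (br y (br w x))) (br w (br x y)) = ze"
  using lie unfolding lie_alg_def Let_def by (elim conjE) (blast | simp)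

lemma add_lcomm: "x \<in> C \<Longrightarrow> y \<in> C \<Longrightarrow> w \<in> C \<Longrightarrow> pl x (pl y w) = pl y (pl x w)"
  by (simp add: add_assoc[symmetric] add_comm[of x y])

lemmas AC = add_assoc add_comm add_lcomm

lemma zero_r[simp]: "x \<in> C \<Longrightarrow> pl x ze = x" using add_comm[of x ze] by simp
lemma neg_l[simp]: "x \<in> C \<Longrightarrow> pl (ng x) x = ze" using add_comm[of "ng x" x] by simp

lemma neg_r2[simp]: "x \<in> C \<Longrightarrow> y \<in> C \<Longrightarrow> pl x (pl (ng x) y) = y"
  by (simp add: add_assoc[symmetric])
lemma neg_l2[simp]: "x \<in> C \<Longrightarrow> y \<in> C \<Longrightarrow> pl (ng x) (pl x y) = y"
  by (simp add: add_assoc[symmetric])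

lemma add_cancel_l: "x \<in> C \<Longrightarrow> y \<in> C \<Longrightarrow> w \<in> C \<Longrightarrow> pl x y = pl x w \<Longrightarrow> y = w"
proof -
  assume a: "x \<in> C" "y \<in> C" "w \<in> C" "pl x y = pl x w"
  have "y = pl (ng x) (pl x y)" using a(1-3) by simp
  also have "\<dots> = pl (ng x) (pl x w)" using a(4) by simp
  also have "\<dots> = w" using a(1-3) by simp
  finally show ?thesis .
qed

lemma add_cancel_l_iff[simp]: "x \<in> C \<Longrightarrow> y \<in> C \<Longrightarrow> w \<in> C \<Longrightarrow> (pl x y = pl x w) = (y = w)"
  using add_cancel_l by blast

lemma add_cancel_r_iff[simp]: "x \<in> C \<Longrightarrow> y \<in> C \<Longrightarrow> w \<in> C \<Longrightarrow> (pl y x = pl w x) = (y = w)"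
  using add_comm[of y x] add_comm[of w x] by simp

lemma eq_via_neg: "x \<in> C \<Longrightarrow> y \<in> C \<Longrightarrow> pl x (ng y) = ze \<Longrightarrow> x = y"
proof -
  assume a: "x \<in> C" "y \<in> C" "pl x (ng y) = ze"
  have "x = pl x (pl (ng y) y)" using a(1-2) by simp
  also have "\<dots> = pl (pl x (ng y)) y" using a(1-2) by (simp add: add_assoc)
  also have "\<dots> = y" using a by simp
  finally show ?thesis .
qed

lemma neg_unique: "x \<in> C \<Longrightarrow> y \<in> C \<Longrightarrow> pl x y = ze \<Longrightarrow> ng x = y"
proof -
  assume a: "x \<in> C" "y \<in> C" "pl x y = ze"
  have "ng x = pl (ng x) ze" using a(1) by simp
  also have "\<dots> = pl (ng x) (pl x y)" using a(3) by simp
  also have "\<dots> = y" using a(1-2) by simp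
  finally show ?thesis .
qed

lemma neg_neg[simp]: "x \<in> C \<Longrightarrow> ng (ng x) = x"
  by (rule neg_unique) simp_all

lemma neg_zero[simp]: "ng ze = ze"
  by (rule neg_unique) simp_all

lemma neg_add: "x \<in> C \<Longrightarrow> y \<in> C \<Longrightarrow> ng (pl x y) = pl (ng x) (ng y)"
proof (rule neg_unique)
  assume a: "x \<in> C" "y \<in> C"
  have "pl (pl x y) (pl (ng x) (ng y)) = pl x (pl (ng x) (pl y (ng y)))"
    using a by (simp only: add_assoc add_lcomm[of y] add_C neg_C)
  thus "pl (pl x y) (pl (ng x) (ng y)) = ze" using a by simp
qed simp_all

lemma self_add_eq: "x \<in> C \<Longrightarrow> y \<in> C \<Longrightarrow> pl x y = x \<Longrightarrow> y = ze"
  using add_cancel_l[of x y ze] by simp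

lemma sm_zero[simp]: "sm c ze = ze"
proof -
  have "pl (sm c ze) (sm c ze) = sm c ze" using sm_add[of ze ze c] by simp
  thus ?thesis using self_add_eq[of "sm c ze" "sm c ze"] by simp
qed

lemma zero_sm[simp]: "x \<in> C \<Longrightarrow> sm 0 x = ze"
proof -
  assume a: "x \<in> C"
  have "pl (sm 0 x) (sm 0 x) = sm 0 x" using add_sm[of x 0 0] a by simp
  thus ?thesis using self_add_eq[of "sm 0 x" "sm 0 x"] a by simp
qed

lemma sm_neg: "x \<in> C \<Longrightarrow> sm c (ng x) = ng (sm c x)"
proof -
  assume a: "x \<in> C"
  have "pl (sm c x) (sm c (ng x)) = ze" using sm_add[of x "ng x" c] a by simp
  thus ?thesis using neg_unique[of "sm c x" "sm c (ng x)"] a by simp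
qed

lemma neg_sm: "x \<in> C \<Longrightarrow> sm (- c) x = ng (sm c x)"
proof -
  assume a: "x \<in> C"
  have "pl (sm c x) (sm (-c) x) = ze" using add_sm[of x c "-c"] a by simp
  thus ?thesis using neg_unique[of "sm c x" "sm (-c) x"] a by simp
qed

lemma br_zero_l[simp]: "x \<in> C \<Longrightarrow> br ze x = ze"
proof -
  assume a: "x \<in> C"
  have "pl (br ze x) (br ze x) = br ze x" using br_add_l[of ze ze x] a by simp
  thus ?thesis using self_add_eq[of "br ze x" "br ze x"] a by simp
qed
lemma br_zero_r[simp]: "x \<in> C \<Longrightarrow> br x ze = ze"
proof -
  assume a: "x \<in> C"
  have "pl (br x ze) (br x ze) = br x ze" using br_add_r[of x ze ze] a by simp
  thus ?thesis using self_add_eq[of "br x ze" "br x ze"] a by simp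
qed

lemma br_neg_l: "x \<in> C \<Longrightarrow> y \<in> C \<Longrightarrow> br (ng x) y = ng (br x y)"
proof -
  assume a: "x \<in> C" "y \<in> C"
  have "pl (br x y) (br (ng x) y) = ze" using br_add_l[of x "ng x" y] a by simp
  thus ?thesis using neg_unique[of "br x y" "br (ng x) y"] a by simp
qed
lemma br_neg_r: "x \<in> C \<Longrightarrow> y \<in> C \<Longrightarrow> br x (ng y) = ng (br x y)"
proof -
  assume a: "x \<in> C" "y \<in> C"
  have "pl (br x y) (br x (ng y)) = ze" using br_add_r[of x y "ng y"] a by simp
  thus ?thesis using neg_unique[of "br x y" "br x (ng y)"] a by simp
qed

lemma antisym: "x \<in> C \<Longrightarrow> y \<in> C \<Longrightarrow> br y x = ng (br x y)"
proof -
  assume a: "x \<in> C" "y \<in> C"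
  have "pl (br x y) (br y x) = pl (pl (br x x) (br x y)) (pl (br y x) (br y y))" using a by simp
  also have "\<dots> = br (pl x y) (pl x y)" using a by (simp only: br_add_l br_add_r add_C br_C AC)
  also have "\<dots> = ze" using a by simp
  finally have "pl (br x y) (br y x) = ze" .
  thus ?thesis using a neg_unique[of "br x y" "br y x"] by simp
qed

end


context UA
begin

lemma lsum_closed:
  assumes "ze \<in> X" "\<And>x y. x \<in> X \<Longrightarrow> y \<in> X \<Longrightarrow> pl x y \<in> X" "set xs \<subseteq> X"
  shows "lsum A xs \<in> X"
  using assms(3) by (induction xs) (auto intro: assms(1,2))

lemma lsum_C[simp]: "set xs \<subseteq> C \<Longrightarrow> lsum A xs \<in> C"
  by (rule lsum_closed) auto

lemma lsum_append: "set xs \<subseteq> C \<Longrightarrow> set ys \<subseteq> C \<Longrightarrow> lsum A (xs @ ys) = pl (lsum A xs) (lsum A ys)"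
  by (induction xs) (auto simp: add_assoc)

lemma lsum_map_add:
  assumes "\<And>x. x \<in> set L \<Longrightarrow> f x \<in> C" "\<And>x. x \<in> set L \<Longrightarrow> g x \<in> C"
  shows "lsum A (map (\<lambda>x. pl (f x) (g x)) L) = pl (lsum A (map f L)) (lsum A (map g L))"
  using assms
proof (induction L)
  case Nil then show ?case by simp
next
  case (Cons a L)
  have fC: "set (map f L) \<subseteq> C" "set (map g L) \<subseteq> C" using Cons.prems by auto
  have "lsum A (map (\<lambda>x. pl (f x) (g x)) (a # L)) = pl (pl (f a) (g a)) (pl (lsum A (map f L)) (lsum A (map g L)))"
    using Cons by simp
  also have "\<dots> = pl (pl (f a) (lsum A (map f L))) (pl (g a) (lsum A (map g L)))"
    using Cons.prems fC by (simp add: AC)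
  finally show ?case by simp
qed

lemma lsum_map_sm:
  assumes "\<And>x. x \<in> set L \<Longrightarrow> f x \<in> C"
  shows "lsum A (map (\<lambda>x. sm c (f x)) L) = sm c (lsum A (map f L))"
  using assms
proof (induction L)
  case (Cons a L)
  have "set (map f L) \<subseteq> C" "f a \<in> C" using Cons.prems by auto
  thus ?case using Cons by (simp add: sm_add)
qed simp

lemma lsum_map_zero:
  assumes "\<And>x. x \<in> set L \<Longrightarrow> f x = ze"
  shows "lsum A (map f L) = ze"
  using assms by (induction L) auto

lemma lsum_perm:
  assumes "distinct xs" "distinct ys" "set xs = set ys" "\<And>x. x \<in> set ys \<Longrightarrow> f x \<in> C"
  shows "lsum A (map f xs) = lsum A (map f ys)"
  using assms
proof (induction xs arbitrary: ys)
  case Nil then show ?case by simp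
next
  case (Cons a xs)
  have "a \<in> set ys" using Cons.prems by auto
  then obtain ys1 ys2 where ys: "ys = ys1 @ a # ys2" by (meson split_list)
  have d: "distinct (ys1 @ ys2)" using Cons.prems ys by auto
  have "set xs = set (a#xs) - {a}" using Cons.prems(1) by auto
  also have "\<dots> = set ys - {a}" using Cons.prems(3) by simp
  also have "\<dots> = set (ys1 @ ys2)" using ys Cons.prems(2) by auto
  finally have s: "set xs = set (ys1 @ ys2)" .
  have fC: "\<And>x. x \<in> set (ys1 @ ys2) \<Longrightarrow> f x \<in> C" using Cons.prems ys by auto
  have IH: "lsum A (map f xs) = lsum A (map f (ys1 @ ys2))"
    using Cons.IH[OF _ d s fC] Cons.prems by auto
  have c1: "set (map f ys1) \<subseteq> C" "set (map f ys2) \<subseteq> C" "f a \<in> C" using fC Cons.prems ys by auto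
  have "lsum A (map f ys) = pl (lsum A (map f ys1)) (pl (f a) (lsum A (map f ys2)))"
    using c1 ys by (simp add: lsum_append)
  also have "\<dots> = pl (f a) (pl (lsum A (map f ys1)) (lsum A (map f ys2)))"
    using c1 by (simp add: AC)
  also have "\<dots> = pl (f a) (lsum A (map f (ys1 @ ys2)))"
    using c1 by (simp add: lsum_append)
  finally show ?case using IH by simp
qed

lemma lsum_subset:
  assumes "distinct xs" "distinct ys" "set xs \<subseteq> set ys" "\<And>x. x \<in> set ys \<Longrightarrow> f x \<in> C"
    "\<And>x. x \<in> set ys \<Longrightarrow> x \<notin> set xs \<Longrightarrow> f x = ze"
  shows "lsum A (map f xs) = lsum A (map f ys)"
proof -
  let ?ys' = "xs @ filter (\<lambda>y. y \<notin> set xs) ys"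
  have "lsum A (map f ys) = lsum A (map f ?ys')"
    by (rule lsum_perm) (use assms in auto)
  also have "\<dots> = pl (lsum A (map f xs)) (lsum A (map f (filter (\<lambda>y. y \<notin> set xs) ys)))"
    using assms by (subst map_append, subst lsum_append) auto
  also have "lsum A (map f (filter (\<lambda>y. y \<notin> set xs) ys)) = ze"
    by (rule lsum_map_zero) (use assms in auto)
  moreover have "set (map f xs) \<subseteq> C" using assms(3,4) by auto
  ultimately show ?thesis by simp
qed

lemma lsum_subset2:
  assumes "distinct xs" "distinct ys" "set xs \<subseteq> set ys" "\<And>x. x \<in> set ys \<Longrightarrow> f x \<in> C"
    "\<And>x. x \<in> set ys \<Longrightarrow> x \<notin> set xs \<Longrightarrow> f x = ze" "\<And>x. x \<in> set xs \<Longrightarrow> g x = f x"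
  shows "lsum A (map g xs) = lsum A (map f ys)"
proof -
  have m: "map g xs = map f xs" using assms(6) by (induction xs) auto
  show ?thesis unfolding m by (rule lsum_subset) (use assms in auto)
qed

lemma lspan_sub: "X \<subseteq> C \<Longrightarrow> lspan A X \<subseteq> C"
proof
  fix x assume a: "X \<subseteq> C" and b: "x \<in> lspan A X"
  from b show "x \<in> C" by (induction rule: lspan.induct) (use a in auto)
qed

lemma lspan_zero_only: "lspan A {ze} = {ze}"
proof
  show "lspan A {ze} \<subseteq> {ze}"
  proof
    fix x assume "x \<in> lspan A {ze}"
    thus "x \<in> {ze}" by (induction rule: lspan.induct) auto
  qed
qed (auto intro: lspan_zero)

lemma C_ideal: "is_ideal A C"
  by (simp add: is_ideal_def)

lemma ideal_gen_ideal:
  assumes "X \<subseteq> C" shows "is_ideal A (ideal_gen A X)" "X \<subseteq> ideal_gen A X"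
proof -
  let ?S = "{J. is_ideal A J \<and> X \<subseteq> J}"
  have CS: "C \<in> ?S" using assms C_ideal by simp
  show "is_ideal A (ideal_gen A X)"
    unfolding is_ideal_def
  proof (intro conjI)
    show "ideal_gen A X \<subseteq> C" using CS unfolding ideal_gen_def by blast
    show "ze \<in> ideal_gen A X" unfolding ideal_gen_def by (auto simp: is_ideal_def)
    show "\<forall>x\<in>ideal_gen A X. \<forall>y\<in>ideal_gen A X. pl x y \<in> ideal_gen A X"
      unfolding ideal_gen_def by (auto simp: is_ideal_def)
    show "\<forall>c. \<forall>x\<in>ideal_gen A X. sm c x \<in> ideal_gen A X"
      unfolding ideal_gen_def by (auto simp: is_ideal_def)
    show "\<forall>x\<in>ideal_gen A X. \<forall>a\<in>C. br x a \<in> ideal_gen A X \<and> br a x \<in> ideal_gen A X"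
      unfolding ideal_gen_def by (auto simp: is_ideal_def)
  qed
  show "X \<subseteq> ideal_gen A X" unfolding ideal_gen_def by blast
qed

lemma nil_sub: "\<Union>{I. nilpotent_ideal A I} \<subseteq> C"
  by (auto simp: nilpotent_ideal_def is_ideal_def)

lemma F_ideal: "is_ideal A F"
  unfolding Fit_def by (rule ideal_gen_ideal(1)[OF nil_sub])

lemma F_C[simp]: "x \<in> F \<Longrightarrow> x \<in> C" using F_ideal by (auto simp: is_ideal_def)
lemma F_zero[simp]: "ze \<in> F" using F_ideal by (auto simp: is_ideal_def)
lemma F_add[simp]: "x \<in> F \<Longrightarrow> y \<in> F \<Longrightarrow> pl x y \<in> F" using F_ideal by (auto simp: is_ideal_def)
lemma F_sm[simp]: "x \<in> F \<Longrightarrow> sm c x \<in> F" using F_ideal by (auto simp: is_ideal_def)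
lemma F_neg[simp]: "x \<in> F \<Longrightarrow> ng x \<in> F"
  using F_sm[of x "-1"] neg_sm[of x 1] by simp
lemma F_br_l[simp]: "x \<in> F \<Longrightarrow> a \<in> C \<Longrightarrow> br x a \<in> F" using F_ideal by (auto simp: is_ideal_def)
lemma F_br_r[simp]: "x \<in> F \<Longrightarrow> a \<in> C \<Longrightarrow> br a x \<in> F" using F_ideal by (auto simp: is_ideal_def)

lemma F_ab[simp]: "x \<in> F \<Longrightarrow> y \<in> F \<Longrightarrow> br x y = ze"
  using UA by (simp add: U_algebra_def)

lemma torsion: "p \<noteq> 0 \<Longrightarrow> b \<in> F \<Longrightarrow> P p b = ze \<Longrightarrow> b = ze"
  using UA by (simp add: U_algebra_def)

lemma br_F[simp]: assumes "x \<in> C" "y \<in> C" shows "br x y \<in> F"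
proof -
  let ?I = "lspan A {br x y | x y. x \<in> C \<and> y \<in> C}"
  have IC: "?I \<subseteq> C" by (rule lspan_sub) auto
  have ideal: "is_ideal A ?I"
    unfolding is_ideal_def
  proof (intro conjI ballI allI)
    fix u a assume "u \<in> ?I" "a \<in> C"
    hence "u \<in> C" using IC by auto
    thus "br u a \<in> ?I" "br a u \<in> ?I" using \<open>a \<in> C\<close> by (auto intro: lspan_gen)
  qed (use IC in \<open>auto intro: lspan_zero lspan_add lspan_smul\<close>)
  have van: "br u w = ze" if u: "u \<in> ?I" and w: "w \<in> ?I" for u w
    using u
  proof (induction rule: lspan.induct)
    case lspan_zero then show ?case using w IC by auto
  next
    case (lspan_gen u')
    then obtain a b where ab: "u' = br a b" "a \<in> C" "b \<in> C" by auto
    show ?case using w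
    proof (induction rule: lspan.induct)
      case lspan_zero then show ?case using ab by simp
    next
      case (lspan_gen w')
      then obtain c d where "w' = br c d" "c \<in> C" "d \<in> C" by auto
      thus ?case using ab met by (auto simp: metabelian_def)
    next
      case (lspan_add x y)
      thus ?case using ab IC br_add_r[of u' x y] by auto
    next
      case (lspan_smul x c)
      thus ?case using ab IC br_sm_r[of u' x c] by auto
    qed
  next
    case (lspan_add x y)
    thus ?case using w IC br_add_l[of x y w] by auto
  next
    case (lspan_smul x c)
    thus ?case using w IC br_sm_l[of x w c] by auto
  qed
  have z0: "ze \<in> ?I" by (rule lspan_zero)
  have "{br u w | u w. u \<in> lcs A ?I 0 \<and> w \<in> ?I} = {ze}"
  proof
    show "{br u w | u w. u \<in> lcs A ?I 0 \<and> w \<in> ?I} \<subseteq> {ze}" using van by auto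
    show "{ze} \<subseteq> {br u w | u w. u \<in> lcs A ?I 0 \<and> w \<in> ?I}"
      using z0 van[OF z0 z0] by force
  qed
  hence "lcs A ?I (Suc 0) = {ze}" by (simp add: lspan_zero_only)
  hence "nilpotent_ideal A ?I" using ideal unfolding nilpotent_ideal_def by blast
  moreover have "br x y \<in> ?I" using assms by (auto intro: lspan_gen)
  ultimately have "br x y \<in> \<Union>{I. nilpotent_ideal A I}" by blast
  thus ?thesis unfolding Fit_def using ideal_gen_ideal(2)[OF nil_sub] by blast
qed

lemma basis: "basis_mod_Fit A z" using UA by (simp add: U_algebra_def)

lemma z_C[simp]: "z a \<in> C" using basis by (simp add: basis_mod_Fit_def)

lemma V_C[simp]: "v \<in> V \<Longrightarrow> v \<in> C" using lspan_sub[of "range z"] by (auto simp: image_subset_iff)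

lemma V_zero[simp]: "ze \<in> V" by (rule lspan_zero)
lemma V_add[simp]: "v \<in> V \<Longrightarrow> w \<in> V \<Longrightarrow> pl v w \<in> V" by (rule lspan_add)
lemma V_sm[simp]: "v \<in> V \<Longrightarrow> sm c v \<in> V" by (rule lspan_smul)
lemma V_neg[simp]: "v \<in> V \<Longrightarrow> ng v \<in> V"
  using V_sm[of v "-1"] neg_sm[of v 1] by simp

lemma decomp: "a \<in> C \<Longrightarrow> \<exists>v\<in>V. \<exists>f\<in>F. a = pl v f"
  using basis by (simp add: basis_mod_Fit_def)

lemma V_rep: "v \<in> V \<Longrightarrow> \<exists>xs c. distinct xs \<and> v = lsum A (map (\<lambda>\<alpha>. sm (c \<alpha>) (z \<alpha>)) xs)"
proof (induction rule: lspan.induct)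
  case lspan_zero
  then show ?case by (rule_tac x="[]" in exI) simp
next
  case (lspan_gen x)
  then obtain a where "x = z a" by auto
  thus ?case by (rule_tac x="[a]" in exI, rule_tac x="\<lambda>_. 1" in exI) simp
next
  case (lspan_add x y)
  then obtain xs c ys d where xs: "distinct xs" "x = lsum A (map (\<lambda>\<alpha>. sm (c \<alpha>) (z \<alpha>)) xs)"
    and ys: "distinct ys" "y = lsum A (map (\<lambda>\<alpha>. sm (d \<alpha>) (z \<alpha>)) ys)" by blast
  define L where "L = remdups (xs @ ys)"
  define c' where "c' \<alpha> = (if \<alpha> \<in> set xs then c \<alpha> else 0)" for \<alpha>
  define d' where "d' \<alpha> = (if \<alpha> \<in> set ys then d \<alpha> else 0)" for \<alpha>
  have x: "x = lsum A (map (\<lambda>\<alpha>. sm (c' \<alpha>) (z \<alpha>)) L)"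
    unfolding xs(2) by (rule lsum_subset2) (use xs(1) in \<open>auto simp: L_def c'_def\<close>)
  have y: "y = lsum A (map (\<lambda>\<alpha>. sm (d' \<alpha>) (z \<alpha>)) L)"
    unfolding ys(2) by (rule lsum_subset2) (use ys(1) in \<open>auto simp: L_def d'_def\<close>)
  have "pl x y = lsum A (map (\<lambda>\<alpha>. pl (sm (c' \<alpha>) (z \<alpha>)) (sm (d' \<alpha>) (z \<alpha>))) L)"
    unfolding x y by (rule lsum_map_add[symmetric]) auto
  also have "\<dots> = lsum A (map (\<lambda>\<alpha>. sm (c' \<alpha> + d' \<alpha>) (z \<alpha>)) L)"
    by (simp add: add_sm)
  finally show ?case by (rule_tac x=L in exI, rule_tac x="\<lambda>\<alpha>. c' \<alpha> + d' \<alpha>" in exI) (simp add: L_def)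
next
  case (lspan_smul x e)
  then obtain xs c where xs: "distinct xs" "x = lsum A (map (\<lambda>\<alpha>. sm (c \<alpha>) (z \<alpha>)) xs)" by blast
  have "sm e x = lsum A (map (\<lambda>\<alpha>. sm e (sm (c \<alpha>) (z \<alpha>))) xs)"
    unfolding xs(2) by (rule lsum_map_sm[symmetric]) auto
  also have "\<dots> = lsum A (map (\<lambda>\<alpha>. sm (e * c \<alpha>) (z \<alpha>)) xs)" by (simp add: mul_sm)
  finally show ?case using xs(1) by (rule_tac x=xs in exI, rule_tac x="\<lambda>\<alpha>. e * c \<alpha>" in exI) simp
qed

lemma VF_zero: assumes "v \<in> V" "v \<in> F" shows "v = ze"
proof -
  obtain xs c where xs: "distinct xs" "v = lsum A (map (\<lambda>\<alpha>. sm (c \<alpha>) (z \<alpha>)) xs)"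
    using V_rep[OF assms(1)] by blast
  have "\<forall>\<alpha>\<in>set xs. c \<alpha> = 0" using basis xs assms(2) unfolding basis_mod_Fit_def by blast
  hence "lsum A (map (\<lambda>\<alpha>. sm (c \<alpha>) (z \<alpha>)) xs) = ze" by (intro lsum_map_zero) auto
  thus ?thesis using xs by simp
qed

lemma decomp_unique:
  assumes "v \<in> V" "v' \<in> V" "f \<in> F" "f' \<in> F" "pl v f = pl v' f'"
  shows "v = v'" "f = f'"
proof -
  have C: "v \<in> C" "v' \<in> C" "f \<in> C" "f' \<in> C" using assms by auto
  have "pl v (ng v') = pl (pl v (pl f (ng f))) (ng v')"
    using C by simp
  also have "\<dots> = pl (pl v f) (pl (ng v') (ng f))"
    using C by (simp only: AC neg_C add_C)
  also have "\<dots> = pl (pl v' f') (pl (ng v') (ng f))" using assms(5) by simp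
  also have "\<dots> = pl (pl v' (ng v')) (pl f' (ng f))" using C by (simp only: AC neg_C add_C)
  also have "\<dots> = pl f' (ng f)" using C by simp
  finally have e: "pl v (ng v') = pl f' (ng f)" .
  have "pl v (ng v') \<in> V" using assms by simp
  moreover have "pl v (ng v') \<in> F" unfolding e using assms by simp
  ultimately have "pl v (ng v') = ze" by (rule VF_zero)
  thus "v = v'" using C eq_via_neg[of v v'] by simp
  hence "pl f' (ng f) = ze" using e \<open>pl v (ng v') = ze\<close> by simp
  thus "f = f'" using C eq_via_neg[of f' f] by simp
qed

end


lemma pm_update_eq: "a \<notin> Poly_Mapping.keys f \<Longrightarrow> Poly_Mapping.update a b f = f + Poly_Mapping.single a b"
  by (rule poly_mapping_eqI)
     (auto simp: lookup_update lookup_add lookup_single in_keys_iff when_def)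

lemma pm_induct[case_names zero single add]:
  assumes "Q 0" "\<And>k v. Q (Poly_Mapping.single k v)" "\<And>f g. Q f \<Longrightarrow> Q g \<Longrightarrow> Q (f + g)"
  shows "Q f"
proof (induction f rule: update_induct)
  case const then show ?case by (rule assms(1))
next
  case (update f a b)
  thus ?case using pm_update_eq[of a f b] assms(2,3) by simp
qed

lemma count_list_replicate: "count_list (replicate k a) b = (if a = b then k else 0)"
  by (induction k) auto

lemma counts_exist: "\<exists>xs. \<forall>\<alpha>. count_list xs \<alpha> = Poly_Mapping.lookup m \<alpha>"
proof (induction m rule: pm_induct)
  case zero then show ?case by (rule_tac x="[]" in exI) simp
next
  case (single k v)
  show ?case by (rule_tac x="replicate v k" in exI) (simp add: count_list_replicate lookup_single when_def)
next
  case (add f g)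
  then obtain xs ys where "\<forall>\<alpha>. count_list xs \<alpha> = Poly_Mapping.lookup f \<alpha>"
    "\<forall>\<alpha>. count_list ys \<alpha> = Poly_Mapping.lookup g \<alpha>" by blast
  thus ?case by (rule_tac x="xs @ ys" in exI) (simp add: lookup_add)
qed

lemma pm_sum_zero: fixes m n :: "'i \<Rightarrow>\<^sub>0 nat" shows "m + n = 0 \<longleftrightarrow> m = 0 \<and> n = 0"
proof
  assume "m + n = 0"
  hence "\<forall>k. Poly_Mapping.lookup m k + Poly_Mapping.lookup n k = 0"
    by (metis lookup_add lookup_zero)
  thus "m = 0 \<and> n = 0" by (auto intro!: poly_mapping_eqI)
qed simp

context UA
begin

lemma wa_Cons[simp]: "word_act A z (a # xs) b = word_act A z xs (br b (z a))"
  by (simp add: word_act_def)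
lemma wa_Nil[simp]: "word_act A z [] b = b"
  by (simp add: word_act_def)
lemma wa_append: "word_act A z (xs @ ys) b = word_act A z ys (word_act A z xs b)"
  by (simp add: word_act_def)

lemma wa_C[simp]: "b \<in> C \<Longrightarrow> word_act A z xs b \<in> C"
  by (induction xs arbitrary: b) auto
lemma wa_F[simp]: "b \<in> F \<Longrightarrow> word_act A z xs b \<in> F"
  by (induction xs arbitrary: b) auto

lemma wa_add: "b \<in> C \<Longrightarrow> c \<in> C \<Longrightarrow> word_act A z xs (pl b c) = pl (word_act A z xs b) (word_act A z xs c)"
  by (induction xs arbitrary: b c) (auto simp: br_add_l)
lemma wa_sm: "b \<in> C \<Longrightarrow> word_act A z xs (sm c b) = sm c (word_act A z xs b)"
  by (induction xs arbitrary: b) (auto simp: br_sm_l)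
lemma wa_zero[simp]: "word_act A z xs ze = ze"
  by (induction xs) auto

lemma J2: assumes "b \<in> F" "u \<in> C" "v \<in> C" shows "br (br b u) v = br (br b v) u"
proof -
  have C: "b \<in> C" using assms by simp
  have j: "pl (pl (br b (br u v)) (br u (br v b))) (br v (br b u)) = ze"
    using jacobi[of b u v] assms C by simp
  have "br b (br u v) = ze" using assms by simp
  moreover have "br u (br v b) = br (br b v) u"
    using assms C antisym[of v b] antisym[of u "br v b"] br_neg_l[of "br v b" u] by simp
  moreover have "br v (br b u) = ng (br (br b u) v)"
    using assms C antisym[of "br b u" v] by simp
  ultimately have "pl (br (br b v) u) (ng (br (br b u) v)) = ze" using j assms C by simp
  thus ?thesis using eq_via_neg assms C by (metis br_C)
qed

lemma wa_br: "b \<in> F \<Longrightarrow> v \<in> C \<Longrightarrow> word_act A z xs (br b v) = br (word_act A z xs b) v"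
proof (induction xs arbitrary: b)
  case Nil then show ?case by simp
next
  case (Cons a xs)
  have "word_act A z (a # xs) (br b v) = word_act A z xs (br (br b v) (z a))" by simp
  also have "\<dots> = word_act A z xs (br (br b (z a)) v)" using J2[of b v "z a"] Cons.prems by simp
  also have "\<dots> = br (word_act A z xs (br b (z a))) v" using Cons by simp
  finally show ?case by simp
qed

lemma wa_perm: "b \<in> F \<Longrightarrow> (\<forall>\<alpha>. count_list xs \<alpha> = count_list ys \<alpha>) \<Longrightarrow> word_act A z xs b = word_act A z ys b"
proof (induction xs arbitrary: ys b)
  case Nil
  hence "ys = []" by (metis count_list_0_iff list.set_intros(1) neq_Nil_conv count_list.simps(1))
  then show ?case by simp
next
  case (Cons x xs)
  have "count_list ys x \<noteq> 0" using Cons.prems(2)[rule_format, of x] by simp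
  hence "x \<in> set ys" by (simp add: count_list_0_iff)
  then obtain ys1 ys2 where ys: "ys = ys1 @ x # ys2" by (meson split_list)
  have cnt: "\<forall>\<alpha>. count_list xs \<alpha> = count_list (ys1 @ ys2) \<alpha>"
  proof
    fix \<alpha> show "count_list xs \<alpha> = count_list (ys1 @ ys2) \<alpha>"
      using Cons.prems(2)[rule_format, of \<alpha>] ys by (auto split: if_splits)
  qed
  have "word_act A z ys b = word_act A z ys2 (br (word_act A z ys1 b) (z x))"
    by (simp add: ys wa_append)
  also have "\<dots> = word_act A z ys2 (word_act A z ys1 (br b (z x)))"
    using wa_br[of b "z x" ys1] Cons.prems by simp
  also have "\<dots> = word_act A z (ys1 @ ys2) (br b (z x))" by (simp add: wa_append)
  also have "\<dots> = word_act A z xs (br b (z x))" using Cons.IH[OF _ cnt] Cons.prems by simp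
  finally show ?case by simp
qed

abbreviation "M \<equiv> mono_act A z"

lemma mono_eq: assumes "b \<in> F" "\<forall>\<alpha>. count_list xs \<alpha> = Poly_Mapping.lookup m \<alpha>"
  shows "M m b = word_act A z xs b"
proof -
  let ?ys = "SOME xs. \<forall>\<alpha>. count_list xs \<alpha> = Poly_Mapping.lookup m \<alpha>"
  have "\<forall>\<alpha>. count_list ?ys \<alpha> = Poly_Mapping.lookup m \<alpha>"
    using someI_ex[OF counts_exist[of m]] .
  hence "word_act A z ?ys b = word_act A z xs b" using assms by (intro wa_perm) auto
  thus ?thesis by (simp add: mono_act_def)
qed

lemma mono_ex: obtains xs where "\<forall>\<alpha>. count_list xs \<alpha> = Poly_Mapping.lookup m \<alpha>"
  using counts_exist by blast

lemma mono_F[simp]: "b \<in> F \<Longrightarrow> M m b \<in> F"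
  by (metis mono_ex mono_eq wa_F)

lemma mono_add_poly: assumes "b \<in> F" shows "M (m + n) b = M m (M n b)"
proof -
  obtain xs where xs: "\<forall>\<alpha>. count_list xs \<alpha> = Poly_Mapping.lookup m \<alpha>" by (rule mono_ex)
  obtain ys where ys: "\<forall>\<alpha>. count_list ys \<alpha> = Poly_Mapping.lookup n \<alpha>" by (rule mono_ex)
  have "\<forall>\<alpha>. count_list (ys @ xs) \<alpha> = Poly_Mapping.lookup (m + n) \<alpha>"
    using xs ys by (simp add: lookup_add)
  hence "M (m + n) b = word_act A z (ys @ xs) b"
    using assms by (intro mono_eq)
  hence "M (m + n) b = word_act A z xs (word_act A z ys b)"
    by (simp add: wa_append)
  thus ?thesis using assms xs ys by (simp add: mono_eq)
qed

lemma mono_zero_poly: "b \<in> F \<Longrightarrow> M 0 b = b"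
  using mono_eq[of b "[]" 0] by simp

lemma mono_var: "b \<in> F \<Longrightarrow> M (Poly_Mapping.single a 1) b = br b (z a)"
  using mono_eq[of b "[a]" "Poly_Mapping.single a 1"] by (simp add: lookup_single when_def)

lemma mono_addb: "b \<in> F \<Longrightarrow> c \<in> F \<Longrightarrow> M m (pl b c) = pl (M m b) (M m c)"
  by (metis mono_ex mono_eq wa_add F_add F_C)
lemma mono_smb: "b \<in> F \<Longrightarrow> M m (sm c b) = sm c (M m b)"
  by (metis mono_ex mono_eq wa_sm F_sm F_C)
lemma mono_br: "b \<in> F \<Longrightarrow> v \<in> C \<Longrightarrow> M m (br b v) = br (M m b) v"
  by (metis mono_ex mono_eq wa_br F_br_l)


end


context UA begin
lemma P_rep:
  assumes "b \<in> F" "distinct L" "Poly_Mapping.keys p \<subseteq> set L"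
  shows "P p b = lsum A (map (\<lambda>m. sm (Poly_Mapping.lookup p m) (M m b)) L)"
proof -
  let ?L0 = "SOME xs. distinct xs \<and> set xs = Poly_Mapping.keys p"
  have "\<exists>xs. distinct xs \<and> set xs = Poly_Mapping.keys p"
  proof -
    from finite_distinct_list[OF finite_keys[of p]] obtain xs where "set xs = Poly_Mapping.keys p" "distinct xs" by (elim exE conjE)
    thus ?thesis by (intro exI conjI)
  qed
  hence L0: "distinct ?L0 \<and> set ?L0 = Poly_Mapping.keys p" by (rule someI_ex)
  have "P p b = lsum A (map (\<lambda>m. sm (Poly_Mapping.lookup p m) (M m b)) ?L0)"
    unfolding poly_act_def by (rule refl)
  also have "\<dots> = lsum A (map (\<lambda>m. sm (Poly_Mapping.lookup p m) (M m b)) L)"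
  proof (rule lsum_subset)
    show "distinct ?L0" "set ?L0 \<subseteq> set L" using L0 assms(3) by auto
    show "distinct L" by (rule assms(2))
    show "sm (Poly_Mapping.lookup p x) (M x b) \<in> C" for x using assms(1) by simp
    show "sm (Poly_Mapping.lookup p x) (M x b) = ze" if "x \<notin> set ?L0" for x
    proof -
      have "Poly_Mapping.lookup p x = 0" using that L0 by (simp add: in_keys_iff)
      thus ?thesis using assms(1) by simp
    qed
  qed
  finally show ?thesis .
qed

lemma P_add_poly: assumes "b \<in> F" shows "P (p + q) b = pl (P p b) (P q b)"
proof -
  have "finite (Poly_Mapping.keys p \<union> Poly_Mapping.keys q)" by simp
  from finite_distinct_list[OF this] obtain L where L: "set L = Poly_Mapping.keys p \<union> Poly_Mapping.keys q" "distinct L"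
    by (elim exE conjE)
  note L = L(2,1)
  have k: "Poly_Mapping.keys (p + q) \<subseteq> set L" "Poly_Mapping.keys p \<subseteq> set L" "Poly_Mapping.keys q \<subseteq> set L"
    using L(2) keys_add[of p q] by blast+
  have "P (p + q) b = lsum A (map (\<lambda>m. sm (Poly_Mapping.lookup (p + q) m) (M m b)) L)"
    by (rule P_rep[OF assms L(1) k(1)])
  also have "\<dots> = lsum A (map (\<lambda>m. pl (sm (Poly_Mapping.lookup p m) (M m b)) (sm (Poly_Mapping.lookup q m) (M m b))) L)"
    using assms by (simp add: lookup_add add_sm)
  also have "\<dots> = pl (lsum A (map (\<lambda>m. sm (Poly_Mapping.lookup p m) (M m b)) L))
                     (lsum A (map (\<lambda>m. sm (Poly_Mapping.lookup q m) (M m b)) L))"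
    using assms by (intro lsum_map_add) auto
  also have "\<dots> = pl (P p b) (P q b)"
    by (simp only: P_rep[OF assms L(1) k(2)] P_rep[OF assms L(1) k(3)])
  finally show ?thesis .
qed

lemma P_single: assumes "b \<in> F" shows "P (Poly_Mapping.single m c) b = sm c (M m b)"
proof -
  have k: "Poly_Mapping.keys (Poly_Mapping.single m c) \<subseteq> set [m]" by simp
  have "P (Poly_Mapping.single m c) b = lsum A (map (\<lambda>m'. sm (Poly_Mapping.lookup (Poly_Mapping.single m c) m') (M m' b)) [m])"
    by (rule P_rep[OF assms _ k]) simp
  also have "\<dots> = pl (sm c (M m b)) ze" by simp
  also have "\<dots> = sm c (M m b)" using assms by simp
  finally show ?thesis .
qed

lemma P_zero_poly: assumes "b \<in> F" shows "P 0 b = ze"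
proof -
  have "P 0 b = P (Poly_Mapping.single 0 0) b" by simp
  also have "\<dots> = sm 0 (M 0 b)" using assms by (rule P_single)
  also have "\<dots> = ze" using assms by simp
  finally show ?thesis .
qed

lemma P_F[simp]: "b \<in> F \<Longrightarrow> P p b \<in> F"
  by (induction p rule: pm_induct) (simp_all add: P_zero_poly P_single P_add_poly)

lemma P_addb: "b \<in> F \<Longrightarrow> c \<in> F \<Longrightarrow> P p (pl b c) = pl (P p b) (P p c)"
proof (induction p rule: pm_induct)
  case zero then show ?case by (simp add: P_zero_poly)
next
  case (single k v) then show ?case by (simp add: P_single mono_addb sm_add)
next
  case (add f g)
  have C: "P f b \<in> C" "P g b \<in> C" "P f c \<in> C" "P g c \<in> C" using add.prems by auto
  show ?case using add C by (simp add: P_add_poly AC)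
qed

lemma P_smb: "b \<in> F \<Longrightarrow> P p (sm c b) = sm c (P p b)"
proof (induction p rule: pm_induct)
  case zero then show ?case by (simp add: P_zero_poly)
next
  case (single k v) then show ?case by (simp add: P_single mono_smb mul_sm[symmetric] mult.commute)
next
  case (add f g) then show ?case by (simp add: P_add_poly sm_add)
qed

lemma P_zerob[simp]: "P p ze = ze"
  using P_smb[of ze p 0] by simp

lemma P_negb: "b \<in> F \<Longrightarrow> P p (ng b) = ng (P p b)"
  using P_smb[of b p "-1"] neg_sm[of b 1] neg_sm[of "P p b" 1] by simp

lemma P_brb: "b \<in> F \<Longrightarrow> v \<in> C \<Longrightarrow> P p (br b v) = br (P p b) v"
proof (induction p rule: pm_induct)
  case zero then show ?case by (simp add: P_zero_poly)
next
  case (single k v) then show ?case by (simp add: P_single mono_br br_sm_l)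
next
  case (add f g) then show ?case by (simp add: P_add_poly br_add_l)
qed

lemma P_mult: "b \<in> F \<Longrightarrow> P (p * q) b = P p (P q b)"
proof (induction p rule: pm_induct)
  case zero then show ?case by (simp add: P_zero_poly)
next
  case (single m c)
  show ?case using single
  proof (induction q rule: pm_induct)
    case zero
    have "P (Poly_Mapping.single m c * 0) b = ze" using zero by (simp only: mult_zero_right P_zero_poly)
    moreover have "P (Poly_Mapping.single m c) (P 0 b) = ze" using zero by (simp only: P_zero_poly P_zerob)
    ultimately show ?case by simp
  next
    case (single n d)
    have "P (Poly_Mapping.single m c * Poly_Mapping.single n d) b = P (Poly_Mapping.single (m + n) (c * d)) b"
      by (simp only: mult_single)
    also have "\<dots> = sm (c * d) (M (m + n) b)" using single by (rule P_single)
    also have "\<dots> = sm c (sm d (M m (M n b)))" using single by (simp add: mono_add_poly mul_sm)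
    also have "\<dots> = sm c (M m (sm d (M n b)))" using single by (simp add: mono_smb)
    also have "\<dots> = P (Poly_Mapping.single m c) (P (Poly_Mapping.single n d) b)"
      using single by (simp add: P_single)
    finally show ?case .
  next
    case (add f g)
    have "P (Poly_Mapping.single m c * (f + g)) b = P (Poly_Mapping.single m c * f + Poly_Mapping.single m c * g) b"
      by (simp only: distrib_left)
    also have "\<dots> = pl (P (Poly_Mapping.single m c * f) b) (P (Poly_Mapping.single m c * g) b)"
      using add.prems by (rule P_add_poly)
    also have "\<dots> = pl (P (Poly_Mapping.single m c) (P f b)) (P (Poly_Mapping.single m c) (P g b))"
      using add by simp
    also have "\<dots> = P (Poly_Mapping.single m c) (pl (P f b) (P g b))"
      using add.prems by (simp add: P_addb)
    also have "\<dots> = P (Poly_Mapping.single m c) (P (f + g) b)"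
      using add.prems by (simp add: P_add_poly)
    finally show ?case .
  qed
next
  case (add f g)
  have "P ((f + g) * q) b = P (f * q + g * q) b" by (simp only: distrib_right)
  also have "\<dots> = pl (P (f * q) b) (P (g * q) b)" using add.prems by (rule P_add_poly)
  also have "\<dots> = pl (P f (P q b)) (P g (P q b))" using add by simp
  also have "\<dots> = P (f + g) (P q b)" using add.prems by (simp add: P_add_poly)
  finally show ?case .
qed

lemma P_one[simp]: "b \<in> F \<Longrightarrow> P 1 b = b"
  using P_single[of b 0 1] mono_zero_poly[of b] by simp

lemma P_X: "b \<in> F \<Longrightarrow> P (Xvar a) b = br b (z a)"
  by (simp add: Xvar_def P_single mono_var del: One_nat_def)

lemma P_comm: "b \<in> F \<Longrightarrow> P p (P q b) = P q (P p b)"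
proof -
  assume b: "b \<in> F"
  have "P p (P q b) = P (p * q) b" using b by (simp add: P_mult)
  also have "\<dots> = P (q * p) b" using mult.commute[of p q] by (rule arg_cong)
  also have "\<dots> = P q (P p b)" using b by (simp add: P_mult)
  finally show ?thesis .
qed

end

lemma ct_single: "Poly_Mapping.lookup (Poly_Mapping.single m c) 0 = (if m = 0 then c else 0)"
  by (simp add: lookup_single when_def)

lemma ct_mult: "Poly_Mapping.lookup ((p::('i,'k::field) mpoly) * q) 0 = Poly_Mapping.lookup p 0 * Poly_Mapping.lookup q 0"
proof (induction p rule: pm_induct)
  case zero then show ?case by simp
next
  case (single m c)
  show ?case
  proof (induction q rule: pm_induct)
    case zero then show ?case by simp
  next
    case (single n d)
    have "Poly_Mapping.single m c * Poly_Mapping.single n d = Poly_Mapping.single (m + n) (c * d)"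
      by (rule mult_single)
    thus ?case by (simp only: ct_single pm_sum_zero) simp
  next
    case (add f g)
    have "Poly_Mapping.single m c * (f + g) = Poly_Mapping.single m c * f + Poly_Mapping.single m c * g"
      by (rule distrib_left)
    thus ?case using add by (simp add: lookup_add distrib_left)
  qed
next
  case (add f g)
  have "(f + g) * q = f * q + g * q" by (rule distrib_right)
  thus ?case using add by (simp add: lookup_add distrib_right)
qed

lemma Delta_ct: "(p::('i,'k::field) mpoly) \<in> Delta \<Longrightarrow> Poly_Mapping.lookup p 0 = 0"
proof (induction rule: Delta.induct)
  case (Delta_gen q \<alpha>)
  have ne: "Poly_Mapping.single \<alpha> (1::nat) \<noteq> 0"
  proof
    assume "Poly_Mapping.single \<alpha> (1::nat) = 0"
    hence "Poly_Mapping.lookup (Poly_Mapping.single \<alpha> (1::nat)) \<alpha> = Poly_Mapping.lookup 0 \<alpha>" by simp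
    thus False by simp
  qed
  have "Poly_Mapping.lookup (Xvar \<alpha> :: ('i,'k) mpoly) 0 = 0"
    unfolding Xvar_def ct_single using ne by simp
  thus ?case by (simp add: ct_mult)
qed (auto simp: lookup_add)


lemma Delta_minus_ct: "(p::('i,'k::field) mpoly) - Poly_Mapping.single 0 (Poly_Mapping.lookup p 0) \<in> Delta"
proof (induction p rule: pm_induct)
  case zero then show ?case by (simp add: Delta_zero)
next
  case (single m c)
  show ?case
  proof (cases "m = 0")
    case True then show ?thesis by (simp add: Delta_zero)
  next
    case False
    then obtain \<alpha> where a: "Poly_Mapping.lookup m \<alpha> \<noteq> 0"
      by (metis poly_mapping_eqI lookup_zero)
    define m' where "m' = m - Poly_Mapping.single \<alpha> 1"
    have "m = m' + Poly_Mapping.single \<alpha> 1"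
      using a by (intro poly_mapping_eqI) (auto simp: m'_def lookup_add lookup_minus lookup_single when_def)
    hence "Poly_Mapping.single m c = Poly_Mapping.single m' c * Xvar \<alpha>"
      by (simp add: Xvar_def mult_single)
    moreover have "Poly_Mapping.lookup (Poly_Mapping.single m c) 0 = 0"
      using False by (simp add: ct_single)
    ultimately show ?thesis by (simp add: Delta_gen)
  qed
next
  case (add f g)
  have e: "f + g - Poly_Mapping.single 0 (Poly_Mapping.lookup (f + g) 0) =
        (f - Poly_Mapping.single 0 (Poly_Mapping.lookup f 0)) + (g - Poly_Mapping.single 0 (Poly_Mapping.lookup g 0))"
    by (simp add: lookup_add single_add)
  show ?case unfolding e by (rule Delta_add) (fact add)+
qed

lemma Delta_iff: "((p::('i,'k::field) mpoly) \<in> Delta) = (Poly_Mapping.lookup p 0 = 0)"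
proof
  assume "Poly_Mapping.lookup p 0 = 0"
  thus "p \<in> Delta" using Delta_minus_ct[of p] by simp
qed (rule Delta_ct)

lemma notDelta_mult: "p \<notin> Delta \<Longrightarrow> q \<notin> Delta \<Longrightarrow> (p::('i,'k::field) mpoly) * q \<notin> Delta"
  by (simp add: Delta_iff ct_mult)

lemma one_notDelta: "(1::('i,'k::field) mpoly) \<notin> Delta"
  by (simp add: Delta_iff)

lemma notDelta_nz: "(p::('i,'k::field) mpoly) \<notin> Delta \<Longrightarrow> p \<noteq> 0"
  using Delta_zero by blast



context UA begin

abbreviation "T \<equiv> loc_triples A z"
abbreviation "cl \<equiv> loc_cls A z"
abbreviation "D \<equiv> loc_Delta A z"

lemma tri_iff[simp]: "((v, m, s) \<in> T) = (v \<in> V \<and> m \<in> F \<and> s \<notin> Delta)"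
  by (simp add: loc_triples_def)

lemma P_cancel: assumes "s \<noteq> 0" "x \<in> F" "y \<in> F" "P s x = P s y" shows "x = y"
proof -
  have "P s (pl x (ng y)) = ze" using assms by (simp add: P_addb P_negb)
  hence "pl x (ng y) = ze" using torsion[OF assms(1)] assms by simp
  thus ?thesis using eq_via_neg assms by simp
qed

lemma rel_iff:
  assumes "(v, m, s) \<in> T" "(v', m', s') \<in> T"
  shows "loc_rel A z (v, m, s) (v', m', s') = (v = v' \<and> P s' m = P s m')"
proof -
  have F: "m \<in> F" "m' \<in> F" "s \<noteq> 0" "s' \<noteq> 0" using assms notDelta_nz by auto
  have "(\<exists>u. u \<notin> Delta \<and> P u (pl (P s' m) (ng (P s m'))) = ze) = (P s' m = P s m')"
  proof
    assume "\<exists>u. u \<notin> Delta \<and> P u (pl (P s' m) (ng (P s m'))) = ze"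
    then obtain u where u: "u \<notin> Delta" "P u (pl (P s' m) (ng (P s m'))) = ze" by blast
    hence "pl (P s' m) (ng (P s m')) = ze" using torsion[OF notDelta_nz[OF u(1)]] F by simp
    thus "P s' m = P s m'" using eq_via_neg F by simp
  next
    assume "P s' m = P s m'"
    hence "P 1 (pl (P s' m) (ng (P s m'))) = ze" using F by simp
    thus "\<exists>u. u \<notin> Delta \<and> P u (pl (P s' m) (ng (P s m'))) = ze" using one_notDelta by blast
  qed
  thus ?thesis by (simp add: loc_rel_def)
qed

lemma rel_refl: "t \<in> T \<Longrightarrow> loc_rel A z t t"
  by (cases t) (auto simp: rel_iff)

lemma rel_sym: "t \<in> T \<Longrightarrow> t' \<in> T \<Longrightarrow> loc_rel A z t t' \<Longrightarrow> loc_rel A z t' t"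
  by (cases t, cases t') (auto simp: rel_iff)

lemma rel_trans: assumes "t \<in> T" "t' \<in> T" "t'' \<in> T" "loc_rel A z t t'" "loc_rel A z t' t''"
  shows "loc_rel A z t t''"
proof -
  obtain v m s where t: "t = (v, m, s)" by (cases t)
  obtain v' m' s' where t': "t' = (v', m', s')" by (cases t')
  obtain v'' m'' s'' where t'': "t'' = (v'', m'', s'')" by (cases t'')
  have F: "m \<in> F" "m' \<in> F" "m'' \<in> F" "s' \<noteq> 0" using assms t t' t'' notDelta_nz by auto
  have e1: "v = v'" "P s' m = P s m'" using assms(1,2,4) t t' by (auto simp: rel_iff)
  have e2: "v' = v''" "P s'' m' = P s' m''" using assms(2,3,5) t' t'' by (auto simp: rel_iff)
  have "P s' (P s'' m) = P s'' (P s' m)" using F by (simp add: P_comm)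
  also have "\<dots> = P s'' (P s m')" using e1 by simp
  also have "\<dots> = P s (P s'' m')" using F by (simp add: P_comm)
  also have "\<dots> = P s (P s' m'')" using e2 by simp
  also have "\<dots> = P s' (P s m'')" using F by (simp add: P_comm)
  finally have "P s'' m = P s m''" using P_cancel[OF F(4)] F by simp
  thus ?thesis using assms t t' t'' e1 e2 by (simp add: rel_iff)
qed

lemma cl_eq: assumes "t \<in> T" "t' \<in> T" shows "(cl t = cl t') = loc_rel A z t t'"
proof
  assume e: "cl t = cl t'"
  have "t' \<in> cl t'" using assms rel_refl by (simp add: loc_cls_def)
  hence "t' \<in> cl t" using e by simp
  thus "loc_rel A z t t'" by (simp add: loc_cls_def)
next
  assume r: "loc_rel A z t t'"
  show "cl t = cl t'"
    unfolding loc_cls_def using r rel_sym rel_trans assms by blast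
qed

lemma cl_eq_iff:
  assumes "(v, m, s) \<in> T" "(v', m', s') \<in> T"
  shows "(cl (v, m, s) = cl (v', m', s')) = (v = v' \<and> P s' m = P s m')"
  using cl_eq[OF assms] rel_iff[OF assms] by simp

lemma cl_eqI:
  assumes "(v, m, s) \<in> T" "(v, m', s') \<in> T" "P s' m = P s m'"
  shows "cl (v, m, s) = cl (v, m', s')"
  using cl_eq_iff[OF assms(1,2)] assms(3) by simp

lemma rep_ex: assumes "t \<in> T"
  obtains t' where "loc_rep (cl t) = t'" "t' \<in> T" "loc_rel A z t t'"
proof -
  have "t \<in> cl t" using assms rel_refl by (simp add: loc_cls_def)
  hence "loc_rep (cl t) \<in> cl t" unfolding loc_rep_def by (rule someI)
  thus ?thesis using that by (simp add: loc_cls_def)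
qed

lemma rep_tri: assumes "(v, m, s) \<in> T"
  obtains n r where "loc_rep (cl (v, m, s)) = (v, n, r)" "(v, n, r) \<in> T" "P r m = P s n"
proof -
  obtain t' where t': "loc_rep (cl (v, m, s)) = t'" "t' \<in> T" "loc_rel A z (v, m, s) t'"
    using rep_ex[OF assms] by blast
  obtain v1 n r where "t' = (v1, n, r)" by (cases t')
  thus ?thesis using t' that assms by (auto simp: rel_iff)
qed

lemma D_carrier: "la_carrier D = cl ` T"
  by (simp add: loc_Delta_def Let_def)
lemma D_zero: "la_zero D = cl (ze, ze, 1)"
  by (simp add: loc_Delta_def Let_def)

lemma D_add:
  assumes a: "(v, m, s) \<in> T" "(v', m', s') \<in> T"
  shows "la_add D (cl (v, m, s)) (cl (v', m', s')) = cl (pl v v', pl (P s' m) (P s m'), s * s')"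
proof -
  obtain n r where r: "loc_rep (cl (v, m, s)) = (v, n, r)" "(v, n, r) \<in> T" "P r m = P s n"
    using rep_tri[OF a(1)] by blast
  obtain n' r' where r': "loc_rep (cl (v', m', s')) = (v', n', r')" "(v', n', r') \<in> T" "P r' m' = P s' n'"
    using rep_tri[OF a(2)] by blast
  have F: "m \<in> F" "m' \<in> F" "n \<in> F" "n' \<in> F" "s \<notin> Delta" "s' \<notin> Delta" "r \<notin> Delta" "r' \<notin> Delta"
    using a r r' by auto
  have "la_add D (cl (v, m, s)) (cl (v', m', s')) = cl (pl v v', pl (P r' n) (P r n'), r * r')"
    using r r' by (simp add: loc_Delta_def Let_def)
  also have "\<dots> = cl (pl v v', pl (P s' m) (P s m'), s * s')"
  proof (rule cl_eqI)
    show "(pl v v', pl (P r' n) (P r n'), r * r') \<in> T" "(pl v v', pl (P s' m) (P s m'), s * s') \<in> T"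
      using a F by (auto simp: notDelta_mult)
    have e1: "P (s * s') (P r' n) = P (r * r') (P s' m)"
    proof -
      have "P (s * s') (P r' n) = P r' (P s' (P s n))" using F by (simp add: P_mult P_comm)
      also have "\<dots> = P r' (P s' (P r m))" using r by simp
      also have "\<dots> = P (r * r') (P s' m)" using F by (simp add: P_mult P_comm)
      finally show ?thesis .
    qed
    have e2: "P (s * s') (P r n') = P (r * r') (P s m')"
    proof -
      have "P (s * s') (P r n') = P r (P s (P s' n'))" using F by (simp add: P_mult P_comm)
      also have "\<dots> = P r (P s (P r' m'))" using r' by simp
      also have "\<dots> = P (r * r') (P s m')" using F by (simp add: P_mult P_comm)
      finally show ?thesis .
    qed
    show "P (s * s') (pl (P r' n) (P r n')) = P (r * r') (pl (P s' m) (P s m'))"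
      using F e1 e2 by (simp add: P_addb)
  qed
  finally show ?thesis .
qed

lemma D_neg:
  assumes a: "(v, m, s) \<in> T"
  shows "la_neg D (cl (v, m, s)) = cl (ng v, ng m, s)"
proof -
  obtain n r where r: "loc_rep (cl (v, m, s)) = (v, n, r)" "(v, n, r) \<in> T" "P r m = P s n"
    using rep_tri[OF a(1)] by blast
  have F: "m \<in> F" "n \<in> F" using a r by auto
  have "la_neg D (cl (v, m, s)) = cl (ng v, ng n, r)"
    using r by (simp add: loc_Delta_def Let_def)
  also have "\<dots> = cl (ng v, ng m, s)"
    by (rule cl_eqI) (use a r F in \<open>auto simp: P_negb\<close>)
  finally show ?thesis .
qed

lemma D_sm:
  assumes a: "(v, m, s) \<in> T"
  shows "la_smul D c (cl (v, m, s)) = cl (sm c v, sm c m, s)"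
proof -
  obtain n r where r: "loc_rep (cl (v, m, s)) = (v, n, r)" "(v, n, r) \<in> T" "P r m = P s n"
    using rep_tri[OF a(1)] by blast
  have F: "m \<in> F" "n \<in> F" using a r by auto
  have "la_smul D c (cl (v, m, s)) = cl (sm c v, sm c n, r)"
    using r by (simp add: loc_Delta_def Let_def)
  also have "\<dots> = cl (sm c v, sm c m, s)"
    by (rule cl_eqI) (use a r F in \<open>auto simp: P_smb\<close>)
  finally show ?thesis .
qed

end


context UA begin

lemma D_br:
  assumes a: "(v, m, s) \<in> T" "(v', m', s') \<in> T"
  shows "la_br D (cl (v, m, s)) (cl (v', m', s')) =
    cl (ze, pl (pl (P (s * s') (br v v')) (P s' (br m v'))) (ng (P s (br m' v))), s * s')"
proof -
  obtain n r where r: "loc_rep (cl (v, m, s)) = (v, n, r)" "(v, n, r) \<in> T" "P r m = P s n"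
    using rep_tri[OF a(1)] by blast
  obtain n' r' where r': "loc_rep (cl (v', m', s')) = (v', n', r')" "(v', n', r') \<in> T" "P r' m' = P s' n'"
    using rep_tri[OF a(2)] by blast
  have F: "m \<in> F" "m' \<in> F" "n \<in> F" "n' \<in> F" "s \<notin> Delta" "s' \<notin> Delta" "r \<notin> Delta" "r' \<notin> Delta"
    "v \<in> V" "v' \<in> V" "v \<in> C" "v' \<in> C"
    using a r r' by auto
  have "la_br D (cl (v, m, s)) (cl (v', m', s')) =
    cl (ze, pl (pl (P (r * r') (br v v')) (P r' (br n v'))) (ng (P r (br n' v))), r * r')"
    using r r' by (simp add: loc_Delta_def Let_def)
  also have "\<dots> = cl (ze, pl (pl (P (s * s') (br v v')) (P s' (br m v'))) (ng (P s (br m' v))), s * s')"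
  proof (rule cl_eqI)
    show "(ze, pl (pl (P (r * r') (br v v')) (P r' (br n v'))) (ng (P r (br n' v))), r * r') \<in> T"
      "(ze, pl (pl (P (s * s') (br v v')) (P s' (br m v'))) (ng (P s (br m' v))), s * s') \<in> T"
      using F by (auto simp: notDelta_mult)
    have e1: "P (s * s') (P (r * r') (br v v')) = P (r * r') (P (s * s') (br v v'))"
      using F by (simp add: P_comm)
    have e2: "P (s * s') (P r' (br n v')) = P (r * r') (P s' (br m v'))"
    proof -
      have "P (s * s') (P r' (br n v')) = P r' (P s' (P s (br n v')))" using F by (simp add: P_mult P_comm)
      also have "P s (br n v') = br (P s n) v'" using F by (simp add: P_brb)
      also have "\<dots> = br (P r m) v'" using r by simp
      also have "\<dots> = P r (br m v')" using F by (simp add: P_brb)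
      also have "P r' (P s' (P r (br m v'))) = P (r * r') (P s' (br m v'))" using F by (simp add: P_mult P_comm)
      finally show ?thesis .
    qed
    have e3: "P (s * s') (P r (br n' v)) = P (r * r') (P s (br m' v))"
    proof -
      have "P (s * s') (P r (br n' v)) = P r (P s (P s' (br n' v)))" using F by (simp add: P_mult P_comm)
      also have "P s' (br n' v) = br (P s' n') v" using F by (simp add: P_brb)
      also have "\<dots> = br (P r' m') v" using r' by simp
      also have "\<dots> = P r' (br m' v)" using F by (simp add: P_brb)
      also have "P r (P s (P r' (br m' v))) = P (r * r') (P s (br m' v))" using F by (simp add: P_mult P_comm)
      finally show ?thesis .
    qed
    show "P (s * s') (pl (pl (P (r * r') (br v v')) (P r' (br n v'))) (ng (P r (br n' v)))) =
          P (r * r') (pl (pl (P (s * s') (br v v')) (P s' (br m v'))) (ng (P s (br m' v))))"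
      using F e1 e2 e3 by (simp add: P_addb P_negb)
  qed
  finally show ?thesis .
qed

lemma J3: assumes "v \<in> C" "w \<in> C" "u \<in> C"
  shows "pl (br (br v u) w) (ng (br (br w u) v)) = br (br v w) u"
proof -
  have j: "pl (pl (br v (br u w)) (br u (br w v))) (br w (br v u)) = ze"
    using jacobi[of v u w] assms by simp
  have a1: "br (br v u) w = ng (br w (br v u))" using antisym[of w "br v u"] assms by simp
  have a2: "ng (br (br w u) v) = br v (br w u)" using antisym[of v "br w u"] assms by simp
  have a3: "br v (br w u) = ng (br v (br u w))" using antisym[of u w] br_neg_r[of v "br u w"] assms by simp
  have a4: "br (br v w) u = ng (br u (br v w))" using antisym[of u "br v w"] assms by simp
  have a5: "br u (br v w) = ng (br u (br w v))" using antisym[of v w] br_neg_r[of u "br w v"] assms by simp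
  have h1: "br u (br w v) = ng (pl (br v (br u w)) (br w (br v u)))"
    using j assms neg_unique[of "pl (br v (br u w)) (br w (br v u))" "br u (br w v)"]
    by (simp add: AC)
  have h2: "br (br v w) u = br u (br w v)" using a4 a5 assms by simp
  have "pl (br (br v u) w) (ng (br (br w u) v)) = pl (ng (br w (br v u))) (ng (br v (br u w)))"
    using a1 a2 a3 by simp
  also have "\<dots> = ng (pl (br v (br u w)) (br w (br v u)))" using assms by (simp add: neg_add add_comm)
  also have "\<dots> = br (br v w) u" using h1 h2 by simp
  finally show ?thesis .
qed

definition dv where "dv a = (SOME v. v \<in> V \<and> (\<exists>f\<in>F. a = pl v f))"
definition df where "df a = (SOME f. f \<in> F \<and> a = pl (dv a) f)"

lemma dec: assumes "a \<in> C" shows "dv a \<in> V" "df a \<in> F" "a = pl (dv a) (df a)"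
proof -
  have "\<exists>v. v \<in> V \<and> (\<exists>f\<in>F. a = pl v f)" using decomp[OF assms] by blast
  hence v: "dv a \<in> V \<and> (\<exists>f\<in>F. a = pl (dv a) f)" unfolding dv_def by (rule someI_ex)
  hence "\<exists>f. f \<in> F \<and> a = pl (dv a) f" by blast
  hence "df a \<in> F \<and> a = pl (dv a) (df a)" unfolding df_def by (rule someI_ex)
  thus "dv a \<in> V" "df a \<in> F" "a = pl (dv a) (df a)" using v by auto
qed

lemma dec_eq: assumes "v \<in> V" "f \<in> F" shows "dv (pl v f) = v" "df (pl v f) = f"
proof -
  have C: "pl v f \<in> C" using assms by simp
  note d = dec[OF C]
  show "dv (pl v f) = v" by (rule decomp_unique(1)[OF d(1) assms(1) d(2) assms(2) d(3)[symmetric]])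
  show "df (pl v f) = f" by (rule decomp_unique(2)[OF d(1) assms(1) d(2) assms(2) d(3)[symmetric]])
qed

definition iota where "iota a = cl (dv a, df a, 1)"

lemma iota_dec: assumes "v \<in> V" "f \<in> F" shows "iota (pl v f) = cl (v, f, 1)"
  using dec_eq[OF assms] by (simp add: iota_def)

lemma iota_tri: "a \<in> C \<Longrightarrow> (dv a, df a, 1) \<in> T"
  using dec(1,2) one_notDelta by simp

lemma iota_carrier: "a \<in> C \<Longrightarrow> iota a \<in> la_carrier D"
  using iota_tri by (simp add: iota_def D_carrier)

lemma iota_inj: assumes "a \<in> C" "b \<in> C" "iota a = iota b" shows "a = b"
proof -
  have "dv a = dv b \<and> P 1 (df a) = P 1 (df b)"
    using assms cl_eq_iff[OF iota_tri[OF assms(1)] iota_tri[OF assms(2)]] by (simp add: iota_def)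
  hence e: "dv a = dv b" "df a = df b" using dec(2)[OF assms(1)] dec(2)[OF assms(2)] by auto
  have "a = pl (dv a) (df a)" using assms(1) by (rule dec(3))
  also have "\<dots> = pl (dv b) (df b)" using e by simp
  also have "\<dots> = b" using assms(2) by (rule dec(3)[symmetric])
  finally show ?thesis .
qed

lemma iota_zero: "iota ze = la_zero D"
  using iota_dec[of ze ze] by (simp add: D_zero)

lemma iota_add: assumes "a \<in> C" "b \<in> C" shows "iota (pl a b) = la_add D (iota a) (iota b)"
proof -
  note da = dec[OF assms(1)] and db = dec[OF assms(2)]
  have C: "dv a \<in> C" "df a \<in> C" "dv b \<in> C" "df b \<in> C" using da(1,2) db(1,2) by auto
  have "pl a b = pl (pl (dv a) (df a)) (pl (dv b) (df b))" using da(3) db(3) by (rule arg_cong2)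
  also have "\<dots> = pl (pl (dv a) (dv b)) (pl (df a) (df b))" using C by (simp only: AC add_C)
  finally have "pl a b = pl (pl (dv a) (dv b)) (pl (df a) (df b))" .
  hence "iota (pl a b) = cl (pl (dv a) (dv b), pl (df a) (df b), 1)"
    using iota_dec da(1,2) db(1,2) by simp
  also have "\<dots> = la_add D (iota a) (iota b)"
    using D_add[OF iota_tri[OF assms(1)] iota_tri[OF assms(2)]] da(1,2) db(1,2) by (simp add: iota_def)
  finally show ?thesis .
qed

lemma iota_neg: assumes "a \<in> C" shows "iota (ng a) = la_neg D (iota a)"
proof -
  note da = dec[OF assms(1)]
  have C: "dv a \<in> C" "df a \<in> C" using da(1,2) by auto
  have "ng a = ng (pl (dv a) (df a))" using da(3) by (rule arg_cong)
  also have "\<dots> = pl (ng (dv a)) (ng (df a))" using C by (rule neg_add)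
  finally have "ng a = pl (ng (dv a)) (ng (df a))" .
  hence "iota (ng a) = cl (ng (dv a), ng (df a), 1)"
    using iota_dec da(1,2) by simp
  also have "\<dots> = la_neg D (iota a)"
    using D_neg[OF iota_tri[OF assms(1)]] by (simp add: iota_def)
  finally show ?thesis .
qed

lemma iota_sm: assumes "a \<in> C" shows "iota (sm c a) = la_smul D c (iota a)"
proof -
  note da = dec[OF assms(1)]
  have C: "dv a \<in> C" "df a \<in> C" using da(1,2) by auto
  have "sm c a = sm c (pl (dv a) (df a))" using da(3) by (rule arg_cong)
  also have "\<dots> = pl (sm c (dv a)) (sm c (df a))" using C by (rule sm_add)
  finally have "sm c a = pl (sm c (dv a)) (sm c (df a))" .
  hence "iota (sm c a) = cl (sm c (dv a), sm c (df a), 1)"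
    using iota_dec da(1,2) by simp
  also have "\<dots> = la_smul D c (iota a)"
    using D_sm[OF iota_tri[OF assms(1)]] by (simp add: iota_def)
  finally show ?thesis .
qed

lemma iota_br: assumes "a \<in> C" "b \<in> C" shows "iota (br a b) = la_br D (iota a) (iota b)"
proof -
  note da = dec[OF assms(1)] and db = dec[OF assms(2)]
  let ?va = "dv a" and ?fa = "df a" and ?vb = "dv b" and ?fb = "df b"
  have C: "?va \<in> C" "?fa \<in> C" "?vb \<in> C" "?fb \<in> C" using da(1,2) db(1,2) by auto
  have "br a b = br (pl ?va ?fa) (pl ?vb ?fb)" using da(3) db(3) by (rule arg_cong2)
  also have "\<dots> = pl (pl (br ?va ?vb) (br ?va ?fb)) (pl (br ?fa ?vb) (br ?fa ?fb))"
    using C by (simp only: br_add_l br_add_r add_C br_C AC)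
  also have "br ?fa ?fb = ze" using da(2) db(2) by simp
  also have "br ?va ?fb = ng (br ?fb ?va)" using C antisym[of ?fb ?va] by simp
  finally have e: "br a b = pl (pl (br ?va ?vb) (br ?fa ?vb)) (ng (br ?fb ?va))"
    using C by (simp add: AC)
  have "iota (br a b) = cl (ze, br a b, 1)"
    using iota_dec[of ze "br a b"] assms by simp
  also have "\<dots> = la_br D (iota a) (iota b)"
    using D_br[OF iota_tri[OF assms(1)] iota_tri[OF assms(2)]] da(1,2) db(1,2) e by (simp add: iota_def)
  finally show ?thesis .
qed

end


definition closed_sub :: "('k, 'a) lie_alg \<Rightarrow> 'a set \<Rightarrow> bool" where
  "closed_sub B S \<longleftrightarrow> S \<subseteq> la_carrier B \<and> la_zero B \<in> S \<and>
     (\<forall>x\<in>S. \<forall>y\<in>S. la_add B x y \<in> S) \<and> (\<forall>x\<in>S. la_neg B x \<in> S) \<and>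
     (\<forall>c. \<forall>x\<in>S. la_smul B c x \<in> S) \<and> (\<forall>x\<in>S. \<forall>y\<in>S. la_br B x y \<in> S)"

definition hom_on :: "('k, 'a) lie_alg \<Rightarrow> ('k, 'b) lie_alg \<Rightarrow> ('a \<Rightarrow> 'b) \<Rightarrow> 'a set \<Rightarrow> bool" where
  "hom_on B1 B2 h S \<longleftrightarrow> h (la_zero B1) = la_zero B2 \<and>
     (\<forall>x\<in>S. \<forall>y\<in>S. h (la_add B1 x y) = la_add B2 (h x) (h y)) \<and>
     (\<forall>x\<in>S. h (la_neg B1 x) = la_neg B2 (h x)) \<and>
     (\<forall>c. \<forall>x\<in>S. h (la_smul B1 c x) = la_smul B2 c (h x)) \<and>
     (\<forall>x\<in>S. \<forall>y\<in>S. h (la_br B1 x y) = la_br B2 (h x) (h y)) \<and>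
     (\<forall>x\<in>S. h x \<in> la_carrier B2) \<and> inj_on h S"

lemma tm_eval_hom:
  assumes cs: "closed_sub B1 S" and hm: "hom_on B1 B2 h S" and e: "\<forall>n. e n \<in> S"
  shows "tm_eval B1 e t \<in> S \<and> h (tm_eval B1 e t) = tm_eval B2 (h \<circ> e) t"
proof (induction t)
  case (TVar n) thus ?case using e by simp
next
  case TZero thus ?case using cs hm unfolding closed_sub_def hom_on_def by simp
next
  case (TAdd s t)
  thus ?case using cs hm unfolding closed_sub_def hom_on_def by (elim conjE) simp
next
  case (TNeg t)
  thus ?case using cs hm unfolding closed_sub_def hom_on_def by (elim conjE) simp
next
  case (TSmul c t)
  thus ?case using cs hm unfolding closed_sub_def hom_on_def by (elim conjE) simp
next
  case (TBr s t)
  thus ?case using cs hm unfolding closed_sub_def hom_on_def by (elim conjE) simp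
qed

lemma qf_hom:
  assumes cs: "closed_sub B1 S" and hm: "hom_on B1 B2 h S" and e: "\<forall>n. e n \<in> S" and q: "qfree p"
  shows "holds B1 e p = holds B2 (h \<circ> e) p"
  using q
proof (induction p)
  case (FEq s t)
  note a = tm_eval_hom[OF cs hm e, of s] tm_eval_hom[OF cs hm e, of t]
  have i: "inj_on h S" using hm by (simp add: hom_on_def)
  have "(tm_eval B1 e s = tm_eval B1 e t) = (h (tm_eval B1 e s) = h (tm_eval B1 e t))"
    using inj_on_eq_iff[OF i, of "tm_eval B1 e s" "tm_eval B1 e t"] a by (simp only:)
  thus ?case using a by (simp add: comp_def)
qed simp_all

lemma tm_eval_cong: "(\<forall>n\<in>tm_vars t. e n = e' n) \<Longrightarrow> tm_eval B e t = tm_eval B e' t"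
  by (induction t) auto

lemma holds_cong_qf: "qfree p \<Longrightarrow> (\<forall>n\<in>fm_free p. e n = e' n) \<Longrightarrow> holds B e p = holds B e' p"
proof (induction p)
  case (FEq s t)
  thus ?case using tm_eval_cong[of s e e' B] tm_eval_cong[of t e e' B] by auto
qed auto

lemma finite_tm_vars: "finite (tm_vars t)"
  by (induction t) auto

lemma finite_fm_free: "finite (fm_free p)"
  by (induction p) (auto simp: finite_tm_vars)

fun strip :: "'k lfm \<Rightarrow> 'k lfm" where
  "strip (FAll x p) = strip p"
| "strip p = p"

lemma strip_qfree: "universal p \<Longrightarrow> qfree (strip p)"
  by (induction p rule: strip.induct) auto

lemma sat_all: fixes B :: "('k, 'a) lie_alg" shows "satisfies B (FAll x p) = satisfies B p"
proof
  assume a: "satisfies B (FAll x p)"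
  show "satisfies B p" unfolding satisfies_def
  proof (intro allI impI)
    fix e :: "nat \<Rightarrow> 'a" assume e: "\<forall>n. e n \<in> la_carrier B"
    hence "holds B e (FAll x p)" using a by (simp add: satisfies_def)
    hence h: "\<forall>c\<in>la_carrier B. holds B (e(x := c)) p" by simp
    have "holds B (e(x := e x)) p" using h e by blast
    thus "holds B e p" by simp
  qed
next
  assume a: "satisfies B p"
  show "satisfies B (FAll x p)" unfolding satisfies_def
  proof (intro allI impI)
    fix e :: "nat \<Rightarrow> 'a" assume e: "\<forall>n. e n \<in> la_carrier B"
    have "\<forall>c\<in>la_carrier B. holds B (e(x := c)) p"
    proof
      fix c assume "c \<in> la_carrier B"
      hence "\<forall>n. (e(x := c)) n \<in> la_carrier B" using e by simp
      thus "holds B (e(x := c)) p" using a by (simp add: satisfies_def)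
    qed
    thus "holds B e (FAll x p)" by simp
  qed
qed

lemma sat_strip: fixes B :: "('k, 'a) lie_alg" shows "satisfies B p = satisfies B (strip p)"
proof (induction p rule: strip.induct)
  case (1 x p)
  thus ?case using sat_all[of B x p] by simp
qed auto

lemma transfer:
  fixes B1 :: "('k, 'a) lie_alg" and B2 :: "('k, 'b) lie_alg"
  assumes u: "universal p" and sat: "satisfies B2 p"
    and emb: "\<And>E. finite E \<Longrightarrow> E \<subseteq> la_carrier B1 \<Longrightarrow>
              \<exists>S h. E \<subseteq> S \<and> closed_sub B1 S \<and> hom_on B1 B2 h S"
  shows "satisfies B1 p"
proof -
  let ?q = "strip p"
  have q: "qfree ?q" using u by (rule strip_qfree)
  have sat2: "satisfies B2 ?q" using sat sat_strip[of B2 p] by simp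
  have "satisfies B1 ?q" unfolding satisfies_def
  proof (intro allI impI)
    fix e :: "nat \<Rightarrow> 'a" assume e: "\<forall>n. e n \<in> la_carrier B1"
    let ?E = "e ` fm_free ?q"
    have fin: "finite ?E" by (simp add: finite_fm_free)
    have sub: "?E \<subseteq> la_carrier B1" using e by auto
    from emb[OF fin sub] obtain S h where S: "?E \<subseteq> S" "closed_sub B1 S" "hom_on B1 B2 h S"
      by (elim exE conjE)
    define e' where "e' n = (if n \<in> fm_free ?q then e n else la_zero B1)" for n
    have z: "la_zero B1 \<in> S" using S(2) by (simp add: closed_sub_def)
    have e'S: "\<forall>n. e' n \<in> S"
    proof
      fix n show "e' n \<in> S" using S(1) z by (cases "n \<in> fm_free ?q") (auto simp: e'_def)
    qed
    have "holds B1 e ?q = holds B1 e' ?q" by (rule holds_cong_qf[OF q]) (simp add: e'_def)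
    also have "\<dots> = holds B2 (h \<circ> e') ?q" by (rule qf_hom[OF S(2,3) e'S q])
    also have "\<dots> = True"
    proof -
      have "\<forall>n. (h \<circ> e') n \<in> la_carrier B2" using e'S S(3) by (simp add: hom_on_def)
      thus ?thesis using sat2 by (simp add: satisfies_def)
    qed
    finally show "holds B1 e ?q" by simp
  qed
  thus ?thesis using sat_strip[of B1 p] by simp
qed



context UA begin

lemma neg_eq_sm: "x \<in> C \<Longrightarrow> ng x = sm (-1) x"
  using neg_sm[of x 1] by simp

lemma tfun: "d \<in> Delta \<Longrightarrow> \<exists>t. (\<forall>v\<in>C. t v \<in> F) \<and> (\<forall>v\<in>C. \<forall>w\<in>C. t (pl v w) = pl (t v) (t w)) \<and>
   (\<forall>c. \<forall>v\<in>C. t (sm c v) = sm c (t v)) \<and>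
   (\<forall>v\<in>C. \<forall>w\<in>C. pl (br (t v) w) (ng (br (t w) v)) = P d (br v w))"
proof (induction rule: Delta.induct)
  case Delta_zero
  show ?case
    by (rule exI[of _ "\<lambda>_. ze"]) (simp add: P_zero_poly)
next
  case (Delta_gen q \<alpha>)
  let ?t = "\<lambda>v. P q (br v (z \<alpha>))"
  have "\<forall>v\<in>C. \<forall>w\<in>C. pl (br (?t v) w) (ng (br (?t w) v)) = P (q * Xvar \<alpha>) (br v w)"
  proof (intro ballI)
    fix v w assume a: "v \<in> C" "w \<in> C"
    have "pl (br (?t v) w) (ng (br (?t w) v)) = pl (P q (br (br v (z \<alpha>)) w)) (ng (P q (br (br w (z \<alpha>)) v)))"
      using a by (simp add: P_brb)
    also have "\<dots> = P q (pl (br (br v (z \<alpha>)) w) (ng (br (br w (z \<alpha>)) v)))"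
      using a by (simp add: P_addb P_negb)
    also have "\<dots> = P q (br (br v w) (z \<alpha>))" using J3[of v w "z \<alpha>"] a by simp
    also have "\<dots> = P (q * Xvar \<alpha>) (br v w)" using a by (simp add: P_mult P_X)
    finally show "pl (br (?t v) w) (ng (br (?t w) v)) = P (q * Xvar \<alpha>) (br v w)" .
  qed
  moreover have "\<forall>v\<in>C. \<forall>w\<in>C. ?t (pl v w) = pl (?t v) (?t w)"
    by (simp add: br_add_l P_addb)
  moreover have "\<forall>c. \<forall>v\<in>C. ?t (sm c v) = sm c (?t v)"
    by (simp add: br_sm_l P_smb)
  moreover have "\<forall>v\<in>C. ?t v \<in> F" by simp
  ultimately show ?case by (intro exI[of _ ?t]) simp
next
  case (Delta_add p q)
  obtain t1 where t1: "\<forall>v\<in>C. t1 v \<in> F" "\<forall>v\<in>C. \<forall>w\<in>C. t1 (pl v w) = pl (t1 v) (t1 w)"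
    "\<forall>c. \<forall>v\<in>C. t1 (sm c v) = sm c (t1 v)"
    "\<forall>v\<in>C. \<forall>w\<in>C. pl (br (t1 v) w) (ng (br (t1 w) v)) = P p (br v w)"
    using Delta_add.IH(1) by (elim exE conjE) simp
  obtain t2 where t2: "\<forall>v\<in>C. t2 v \<in> F" "\<forall>v\<in>C. \<forall>w\<in>C. t2 (pl v w) = pl (t2 v) (t2 w)"
    "\<forall>c. \<forall>v\<in>C. t2 (sm c v) = sm c (t2 v)"
    "\<forall>v\<in>C. \<forall>w\<in>C. pl (br (t2 v) w) (ng (br (t2 w) v)) = P q (br v w)"
    using Delta_add.IH(2) by (elim exE conjE) simp
  let ?t = "\<lambda>v. pl (t1 v) (t2 v)"
  have "\<forall>v\<in>C. \<forall>w\<in>C. pl (br (?t v) w) (ng (br (?t w) v)) = P (p + q) (br v w)"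
  proof (intro ballI)
    fix v w assume a: "v \<in> C" "w \<in> C"
    have C: "t1 v \<in> C" "t2 v \<in> C" "t1 w \<in> C" "t2 w \<in> C" using a t1(1) t2(1) by auto
    have "pl (br (?t v) w) (ng (br (?t w) v)) =
          pl (pl (br (t1 v) w) (br (t2 v) w)) (pl (ng (br (t1 w) v)) (ng (br (t2 w) v)))"
      using a C by (simp add: br_add_l neg_add)
    also have "\<dots> = pl (pl (br (t1 v) w) (ng (br (t1 w) v))) (pl (br (t2 v) w) (ng (br (t2 w) v)))"
      using a C by (simp only: AC br_C neg_C add_C)
    also have "\<dots> = P (p + q) (br v w)" using a t1(4) t2(4) by (simp add: P_add_poly)
    finally show "pl (br (?t v) w) (ng (br (?t w) v)) = P (p + q) (br v w)" .
  qed
  moreover have "\<forall>v\<in>C. \<forall>w\<in>C. ?t (pl v w) = pl (?t v) (?t w)"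
  proof (intro ballI)
    fix v w assume a: "v \<in> C" "w \<in> C"
    have C: "t1 v \<in> C" "t2 v \<in> C" "t1 w \<in> C" "t2 w \<in> C" using a t1(1) t2(1) by auto
    show "?t (pl v w) = pl (?t v) (?t w)" using a C t1(2) t2(2) by (simp add: AC)
  qed
  moreover have "\<forall>c. \<forall>v\<in>C. ?t (sm c v) = sm c (?t v)"
    using t1(1,3) t2(1,3) by (simp add: sm_add)
  moreover have "\<forall>v\<in>C. ?t v \<in> F" using t1(1) t2(1) by simp
  ultimately show ?case by (intro exI[of _ ?t]) simp
qed

lemma common_den:
  "finite E \<Longrightarrow> E \<subseteq> cl ` T \<Longrightarrow> \<exists>S. S \<notin> Delta \<and> (\<forall>Q\<in>E. \<exists>v m. v \<in> V \<and> m \<in> F \<and> Q = cl (v, m, S))"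
proof (induction E rule: finite_induct)
  case empty
  show ?case using one_notDelta by (intro exI[of _ 1]) simp
next
  case (insert Q E)
  have "E \<subseteq> cl ` T" using insert.prems by simp
  from insert.IH[OF this] obtain S where S: "S \<notin> Delta" "\<forall>Q\<in>E. \<exists>v m. v \<in> V \<and> m \<in> F \<and> Q = cl (v, m, S)"
    by (elim exE conjE)
  obtain tq where tq: "tq \<in> T" "Q = cl tq" using insert.prems by auto
  obtain v0 m0 s0 where q: "tq = (v0, m0, s0)" by (cases tq)
  have q0: "v0 \<in> V" "m0 \<in> F" "s0 \<notin> Delta" using tq q by auto
  have SS: "S * s0 \<notin> Delta" using S(1) q0(3) by (rule notDelta_mult)
  have "\<forall>Q'\<in>insert Q E. \<exists>v m. v \<in> V \<and> m \<in> F \<and> Q' = cl (v, m, S * s0)"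
  proof
    fix Q' assume "Q' \<in> insert Q E"
    hence "Q' = Q \<or> Q' \<in> E" by simp
    thus "\<exists>v m. v \<in> V \<and> m \<in> F \<and> Q' = cl (v, m, S * s0)"
    proof
      assume "Q' = Q"
      have "cl (v0, m0, s0) = cl (v0, P S m0, S * s0)"
        by (rule cl_eqI) (use q0 SS in \<open>simp_all add: P_mult P_comm[of m0 S s0]\<close>)
      thus ?thesis using \<open>Q' = Q\<close> tq q q0 by (intro exI[of _ v0] exI[of _ "P S m0"]) simp
    next
      assume "Q' \<in> E"
      then obtain v m where vm: "v \<in> V" "m \<in> F" "Q' = cl (v, m, S)" using S(2) by blast
      have "cl (v, m, S) = cl (v, P s0 m, S * s0)"
        by (rule cl_eqI) (use vm S SS in \<open>simp_all add: P_mult\<close>)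
      thus ?thesis using vm by (intro exI[of _ v] exI[of _ "P s0 m"]) simp
    qed
  qed
  thus ?case using SS by blast
qed

end


locale PSI = UA A z for A :: "('k::field, 'a) lie_alg" and z :: "'i \<Rightarrow> 'a" +
  fixes Tn :: "('i, 'k) mpoly" and t :: "'a \<Rightarrow> 'a"
  assumes Tn1: "Poly_Mapping.lookup Tn 0 = 1"
    and tF: "\<And>v. v \<in> la_carrier A \<Longrightarrow> t v \<in> Fit A"
    and t_add: "\<And>v w. v \<in> la_carrier A \<Longrightarrow> w \<in> la_carrier A \<Longrightarrow> t (la_add A v w) = la_add A (t v) (t w)"
    and t_sm: "\<And>v c. v \<in> la_carrier A \<Longrightarrow> t (la_smul A c v) = la_smul A c (t v)"
    and t_id: "\<And>v w. v \<in> la_carrier A \<Longrightarrow> w \<in> la_carrier A \<Longrightarrow>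
        la_add A (la_br A (t v) w) (la_neg A (la_br A (t w) v)) = poly_act A z (Tn - 1) (la_br A v w)"
begin

lemma TnD[simp]: "Tn \<notin> Delta" using Tn1 by (simp add: Delta_iff)
lemma Tn_nz: "Tn \<noteq> 0" using TnD notDelta_nz by blast

lemma P_Tn: assumes "x \<in> F" shows "P Tn x = pl x (P (Tn - 1) x)"
proof -
  have "Tn = 1 + (Tn - 1)" by simp
  hence "P Tn x = P (1 + (Tn - 1)) x" by (rule arg_cong)
  also have "\<dots> = pl (P 1 x) (P (Tn - 1) x)" by (rule P_add_poly[OF assms])
  also have "\<dots> = pl x (P (Tn - 1) x)" using assms by simp
  finally show ?thesis .
qed

lemma tri_Tn[simp]: "v \<in> V \<Longrightarrow> m \<in> F \<Longrightarrow> (v, m, Tn) \<in> T"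
  using TnD by simp

lemma tC[simp]: "v \<in> C \<Longrightarrow> t v \<in> C" using tF by simp
lemma tF'[simp]: "v \<in> C \<Longrightarrow> t v \<in> F" using tF by simp

lemma t_zero[simp]: "t ze = ze"
  using t_sm[of ze 0] by simp

lemma t_neg: "v \<in> C \<Longrightarrow> t (ng v) = ng (t v)"
  using t_sm[of v "-1"] neg_eq_sm[of v] neg_eq_sm[of "t v"] by simp

definition Sub where "Sub = {cl (v, m, Tn) | v m. v \<in> V \<and> m \<in> F}"

definition psi where
  "psi Q = (let vm = (SOME vm. fst vm \<in> V \<and> snd vm \<in> F \<and> Q = cl (fst vm, snd vm, Tn))
            in pl (pl (fst vm) (t (fst vm))) (snd vm))"

lemma Sub_inj: assumes "v \<in> V" "m \<in> F" "v' \<in> V" "m' \<in> F" "cl (v, m, Tn) = cl (v', m', Tn)"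
  shows "v = v'" "m = m'"
proof -
  have t: "(v, m, Tn) \<in> T" "(v', m', Tn) \<in> T" using assms(1-4) by simp_all
  have "v = v' \<and> P Tn m = P Tn m'" by (rule iffD1[OF cl_eq_iff[OF t] assms(5)])
  hence e: "v = v'" "P Tn m = P Tn m'" by auto
  show "v = v'" by (rule e(1))
  show "m = m'" using P_cancel[OF Tn_nz assms(2) assms(4) e(2)] .
qed

lemma psi_eq: assumes "v \<in> V" "m \<in> F" shows "psi (cl (v, m, Tn)) = pl (pl v (t v)) m"
proof -
  let ?vm = "SOME vm. fst vm \<in> V \<and> snd vm \<in> F \<and> cl (v, m, Tn) = cl (fst vm, snd vm, Tn)"
  have "\<exists>vm. fst vm \<in> V \<and> snd vm \<in> F \<and> cl (v, m, Tn) = cl (fst vm, snd vm, Tn)"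
    using assms by (intro exI[of _ "(v, m)"]) simp
  hence h: "fst ?vm \<in> V \<and> snd ?vm \<in> F \<and> cl (v, m, Tn) = cl (fst ?vm, snd ?vm, Tn)" by (rule someI_ex)
  hence "fst ?vm = v" "snd ?vm = m" using Sub_inj[of v m "fst ?vm" "snd ?vm"] assms by auto
  thus ?thesis by (simp add: psi_def Let_def)
qed

lemma zero_Sub: "la_zero D = cl (ze, ze, Tn)"
  unfolding D_zero by (rule cl_eqI) (simp_all add: one_notDelta TnD)

lemma add_Sub: assumes "v \<in> V" "m \<in> F" "v' \<in> V" "m' \<in> F"
  shows "la_add D (cl (v, m, Tn)) (cl (v', m', Tn)) = cl (pl v v', pl m m', Tn)"
proof -
  have "la_add D (cl (v, m, Tn)) (cl (v', m', Tn)) = cl (pl v v', pl (P Tn m) (P Tn m'), Tn * Tn)"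
    using assms by (simp add: D_add)
  also have "\<dots> = cl (pl v v', pl m m', Tn)"
    by (rule cl_eqI) (use assms TnD in \<open>simp_all add: notDelta_mult P_mult P_addb\<close>)
  finally show ?thesis .
qed

lemma neg_Sub: assumes "v \<in> V" "m \<in> F" shows "la_neg D (cl (v, m, Tn)) = cl (ng v, ng m, Tn)"
  using assms by (simp add: D_neg)

lemma sm_Sub: assumes "v \<in> V" "m \<in> F" shows "la_smul D c (cl (v, m, Tn)) = cl (sm c v, sm c m, Tn)"
  using assms by (simp add: D_sm)

lemma br_Sub: assumes "v \<in> V" "m \<in> F" "v' \<in> V" "m' \<in> F"
  shows "la_br D (cl (v, m, Tn)) (cl (v', m', Tn)) = cl (ze, pl (pl (P Tn (br v v')) (br m v')) (ng (br m' v)), Tn)"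
proof -
  have C: "v \<in> C" "v' \<in> C" "m \<in> C" "m' \<in> C" using assms by auto
  let ?Y = "pl (pl (P Tn (br v v')) (br m v')) (ng (br m' v))"
  have Y: "?Y \<in> F" using assms C by simp
  have X: "pl (pl (P (Tn * Tn) (br v v')) (P Tn (br m v'))) (ng (P Tn (br m' v))) = P Tn ?Y"
    using assms C by (simp add: P_mult P_addb P_negb)
  have "la_br D (cl (v, m, Tn)) (cl (v', m', Tn)) =
        cl (ze, pl (pl (P (Tn * Tn) (br v v')) (P Tn (br m v'))) (ng (P Tn (br m' v))), Tn * Tn)"
    using assms by (simp add: D_br)
  also have "\<dots> = cl (ze, P Tn ?Y, Tn * Tn)" by (simp only: X)
  also have "\<dots> = cl (ze, ?Y, Tn)"
    by (rule cl_eqI) (use Y TnD in \<open>simp_all add: notDelta_mult P_mult\<close>)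
  finally show ?thesis .
qed

lemma Sub_E: assumes "Q \<in> Sub" obtains v m where "v \<in> V" "m \<in> F" "Q = cl (v, m, Tn)"
  using assms unfolding Sub_def by blast

lemma Sub_I: "v \<in> V \<Longrightarrow> m \<in> F \<Longrightarrow> cl (v, m, Tn) \<in> Sub"
  unfolding Sub_def by blast

lemma closed: "closed_sub D Sub"
  unfolding closed_sub_def
proof (intro conjI ballI allI)
  show "Sub \<subseteq> la_carrier D"
  proof
    fix Q assume "Q \<in> Sub"
    then obtain v m where "v \<in> V" "m \<in> F" "Q = cl (v, m, Tn)" by (rule Sub_E)
    thus "Q \<in> la_carrier D" unfolding D_carrier by (simp add: image_iff) (rule bexI[of _ "(v, m, Tn)"], simp_all)
  qed
  show "la_zero D \<in> Sub" unfolding zero_Sub by (rule Sub_I) simp_all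
next
  fix x y assume "x \<in> Sub" "y \<in> Sub"
  then obtain v m v' m' where a: "v \<in> V" "m \<in> F" "x = cl (v, m, Tn)" "v' \<in> V" "m' \<in> F" "y = cl (v', m', Tn)"
    by (metis Sub_E)
  show "la_add D x y \<in> Sub" using a by (simp add: add_Sub Sub_I)
  show "la_br D x y \<in> Sub" using a by (simp add: br_Sub Sub_I)
next
  fix x assume "x \<in> Sub"
  then obtain v m where a: "v \<in> V" "m \<in> F" "x = cl (v, m, Tn)" by (rule Sub_E)
  show "la_neg D x \<in> Sub" using a by (simp add: neg_Sub Sub_I)
next
  fix c x assume "x \<in> Sub"
  then obtain v m where a: "v \<in> V" "m \<in> F" "x = cl (v, m, Tn)" by (rule Sub_E)
  show "la_smul D c x \<in> Sub" using a by (simp add: sm_Sub Sub_I)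
qed


lemma psi_br_calc:
  assumes "v \<in> V" "m \<in> F" "v' \<in> V" "m' \<in> F"
  shows "br (pl (pl v (t v)) m) (pl (pl v' (t v')) m') = pl (pl (P Tn (br v v')) (br m v')) (ng (br m' v))"
proof -
  have C: "v \<in> C" "v' \<in> C" "m \<in> C" "m' \<in> C" "t v \<in> C" "t v' \<in> C" using assms by auto
  let ?f = "pl (t v) m" and ?f' = "pl (t v') m'"
  have fF: "?f \<in> F" "?f' \<in> F" using assms by auto
  have "br (pl (pl v (t v)) m) (pl (pl v' (t v')) m') = br (pl v ?f) (pl v' ?f')"
    using C by (simp add: add_assoc)
  also have "\<dots> = pl (pl (br v v') (br v ?f')) (pl (br ?f v') (br ?f ?f'))"
    using C by (simp only: br_add_l br_add_r add_C br_C AC)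
  also have "br ?f ?f' = ze" using fF by simp
  also have "br v ?f' = ng (br ?f' v)" using C antisym[of ?f' v] by simp
  also have "br ?f v' = pl (br (t v) v') (br m v')" using C by (simp add: br_add_l)
  also have "br ?f' v = pl (br (t v') v) (br m' v)" using C by (simp add: br_add_l)
  finally have L: "br (pl (pl v (t v)) m) (pl (pl v' (t v')) m') =
     pl (pl (br v v') (ng (pl (br (t v') v) (br m' v)))) (pl (pl (br (t v) v') (br m v')) ze)" .
  have "P Tn (br v v') = pl (br v v') (P (Tn - 1) (br v v'))" using C by (simp add: P_Tn)
  also have "P (Tn - 1) (br v v') = pl (br (t v) v') (ng (br (t v') v))" using t_id C by simp
  finally have R: "P Tn (br v v') = pl (br v v') (pl (br (t v) v') (ng (br (t v') v)))" .
  show ?thesis unfolding L R using C by (simp add: neg_add AC)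
qed

lemma hom: "hom_on D A psi Sub"
  unfolding hom_on_def
proof (intro conjI ballI allI)
  show "psi (la_zero D) = ze" unfolding zero_Sub by (simp add: psi_eq)
next
  fix x y assume "x \<in> Sub" "y \<in> Sub"
  then obtain v m v' m' where a: "v \<in> V" "m \<in> F" "x = cl (v, m, Tn)" "v' \<in> V" "m' \<in> F" "y = cl (v', m', Tn)"
    by (metis Sub_E)
  have C: "v \<in> C" "v' \<in> C" "m \<in> C" "m' \<in> C" "t v \<in> C" "t v' \<in> C" using a by auto
  show "psi (la_add D x y) = pl (psi x) (psi y)"
    using a C by (simp add: add_Sub psi_eq t_add AC)
  show "psi (la_br D x y) = br (psi x) (psi y)"
    using a C by (simp add: br_Sub psi_eq psi_br_calc)
next
  fix x assume "x \<in> Sub"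
  then obtain v m where a: "v \<in> V" "m \<in> F" "x = cl (v, m, Tn)" by (rule Sub_E)
  have C: "v \<in> C" "m \<in> C" "t v \<in> C" using a by auto
  show "psi (la_neg D x) = ng (psi x)" using a C by (simp add: neg_Sub psi_eq t_neg neg_add)
  show "psi x \<in> C" using a C by (simp add: psi_eq)
next
  fix c x assume "x \<in> Sub"
  then obtain v m where a: "v \<in> V" "m \<in> F" "x = cl (v, m, Tn)" by (rule Sub_E)
  have C: "v \<in> C" "m \<in> C" "t v \<in> C" using a by auto
  show "psi (la_smul D c x) = sm c (psi x)" using a C by (simp add: sm_Sub psi_eq t_sm sm_add)
next
  show "inj_on psi Sub"
  proof (rule inj_onI)
    fix x y assume "x \<in> Sub" "y \<in> Sub" and e: "psi x = psi y"
    then obtain v m v' m' where a: "v \<in> V" "m \<in> F" "x = cl (v, m, Tn)" "v' \<in> V" "m' \<in> F" "y = cl (v', m', Tn)"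
      by (metis Sub_E)
    have C: "v \<in> C" "v' \<in> C" "m \<in> C" "m' \<in> C" "t v \<in> C" "t v' \<in> C" using a by auto
    have "pl v (pl (t v) m) = pl v' (pl (t v') m')"
      using e a C by (simp add: psi_eq add_assoc)
    hence vv: "v = v'" and ff: "pl (t v) m = pl (t v') m'"
      using decomp_unique[of v v' "pl (t v) m" "pl (t v') m'"] a by auto
    hence "m = m'" using C by simp
    thus "x = y" using a vv by simp
  qed
qed

end


context UA begin

lemma embed_D:
  assumes fin: "finite E" and sub: "E \<subseteq> la_carrier D"
  shows "\<exists>S h. E \<subseteq> S \<and> closed_sub D S \<and> hom_on D A h S"
proof -
  have "E \<subseteq> cl ` T" using sub by (simp add: D_carrier)
  from common_den[OF fin this] obtain S0 where S0: "S0 \<notin> Delta"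
    "\<forall>Q\<in>E. \<exists>v m. v \<in> V \<and> m \<in> F \<and> Q = cl (v, m, S0)" by (elim exE conjE)
  define c where "c = Poly_Mapping.lookup S0 0"
  have c: "c \<noteq> 0" using S0(1) by (simp add: Delta_iff c_def)
  define k :: "('i, 'k) mpoly" where "k = Poly_Mapping.single 0 (inverse c)"
  define Tn where "Tn = k * S0"
  have Tn1: "Poly_Mapping.lookup Tn 0 = 1"
    using c by (simp add: Tn_def k_def ct_mult ct_single c_def)
  have TnD: "Tn \<notin> Delta" using Tn1 by (simp add: Delta_iff)
  have d: "Tn - 1 \<in> Delta" using Tn1 by (simp add: Delta_iff lookup_minus)
  from tfun[OF d] obtain t where t: "\<forall>v\<in>C. t v \<in> F" "\<forall>v\<in>C. \<forall>w\<in>C. t (pl v w) = pl (t v) (t w)"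
    "\<forall>c. \<forall>v\<in>C. t (sm c v) = sm c (t v)"
    "\<forall>v\<in>C. \<forall>w\<in>C. pl (br (t v) w) (ng (br (t w) v)) = P (Tn - 1) (br v w)"
    by (elim exE conjE)
  interpret Ps: PSI A z Tn t
    by (unfold_locales) (use Tn1 t in auto)
  have "E \<subseteq> Ps.Sub"
  proof
    fix Q assume "Q \<in> E"
    then obtain v m where vm: "v \<in> V" "m \<in> F" "Q = cl (v, m, S0)" using S0(2) by blast
    have "cl (v, m, S0) = cl (v, P k m, Tn)"
      by (rule cl_eqI) (use vm S0(1) TnD in \<open>simp_all add: Tn_def P_mult P_comm[of m k S0]\<close>)
    thus "Q \<in> Ps.Sub" using vm by (simp add: Ps.Sub_I)
  qed
  thus ?thesis using Ps.closed Ps.hom by blast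
qed

lemma embed_A:
  assumes fin: "finite E" and sub: "E \<subseteq> C"
  shows "\<exists>S h. E \<subseteq> S \<and> closed_sub A S \<and> hom_on A D h S"
proof (intro exI conjI)
  show "E \<subseteq> C" by (rule sub)
  show "closed_sub A C" by (simp add: closed_sub_def)
  show "hom_on A D iota C"
    unfolding hom_on_def
    by (intro conjI ballI allI)
       (simp_all add: iota_zero iota_add iota_neg iota_sm iota_br iota_carrier inj_on_def iota_inj)
qed

end

theorem proposition4p2p2:
  fixes A :: "('k::field, 'a) lie_alg" and z :: "'i \<Rightarrow> 'a"
  assumes "lie_alg A" and "metabelian A" and "U_algebra A z"
  shows "universally_equivalent A (loc_Delta A z)"
proof -
  interpret UA A z using assms(3) by unfold_locales
  show ?thesis unfolding universally_equivalent_def universal_sentence_def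
  proof (intro allI impI)
    fix p :: "'k lfm" assume "universal p \<and> fm_free p = {}"
    hence u: "universal p" by simp
    show "satisfies A p = satisfies (loc_Delta A z) p"
    proof
      assume "satisfies A p"
      thus "satisfies (loc_Delta A z) p" by (rule transfer[OF u]) (rule embed_D)
    next
      assume "satisfies (loc_Delta A z) p"
      thus "satisfies A p" by (rule transfer[OF u]) (rule embed_A)
    qed
  qed
qed



end
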